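(* Under the bounded overflow sharing model with $\mu_1=\mu_2$, if $E(N_1,a_1)=E(N_2,a_2)$, then the utilitarian bargaining solution, i.e. the minimizer of $\frac{\lambda_1}{\lambda_1+\lambda_2}B_1(x_1,x_2)+\frac{\lambda_2}{\lambda_1+\lambda_2}B_2(x_1,x_2)$ over the closure of $\hat{\mathcal{P}}$, is $(1,1)$.
   Context: Two service providers $P_1,P_2$. Provider $P_i$ has $N_i$ servers ($N_i$ a positive integer); its calls arrive as a Poisson process of rate $\lambda_i>0$ with i.i.d. holding times of mean $1/\mu_i<\infty$, all independent; $a_i=\lambda_i/\mu_i$. $E(N,a)=\frac{a^N/N!}{\sum_{j=0}^N a^j/j!}$ is the Erlang-B formula. $-i$ denotes the index other than $i$. $n_i$ is the number of active calls of $P_i$; calls are not attached to specific servers (call repacking). Bounded overflow model with parameter $(k_1,k_2)$, $k_i\in[0,N_i]$, $\{k\}=k-\lfloor k\rfloor$: an arriving call of $P_{-i}$ is admitted if $n_{-i}<N_{-i}+\lfloor k_i\rfloor$ and $n_1+n_2<N_1+N_2$; admitted with probability $\{k_i\}$ if $n_{-i}=N_{-i}+\lfloor k_i\rfloor$ and $n_1+n_2<N_1+N_2$; otherwise blocked. For $(x_1,x_2)\in[0,1]^2$, $B_i(x_1,x_2)$ is the steady-state blocking probability of $P_i$'s calls in this model with $(k_1,k_2)=(x_1N_1,x_2N_2)$. A configuration $x\in[0,1]^2$ is QoS-stable if $B_i(x)<E(N_i,a_i)$ for $i=1,2$; it is Pareto-efficient if it is QoS-stable and there is no $x'\in[0,1]^2$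 with $B_i(x')\le B_i(x)$ for all $i$ and $B_i(x')<B_i(x)$ for some $i$. $\hat{\mathcal{P}}$ is the set of Pareto-efficient configurations. *)

theory Defs
  imports "HOL-Analysis.Analysis"
begin

definition erlangB :: "nat \<Rightarrow> real \<Rightarrow> real" where
  "erlangB N a = (a ^ N / fact N) / (\<Sum>j\<le>N. a ^ j / fact j)"

text \<open>Admission probability of an arriving call of a provider with N_own servers,
  currently n_own active calls, when the other provider lends k servers
  (bounded overflow), total occupancy tot and total capacity C.\<close>
definition adm :: "nat \<Rightarrow> real \<Rightarrow> nat \<Rightarrow> nat \<Rightarrow> nat \<Rightarrow> real" where
  "adm Nown k n tot C =
     (if tot < C then
        (if n < Nown + nat \<lfloor>k\<rfloor> then 1
         else if n = Nown + nat \<lfloor>k\<rfloor> then frac k else 0)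
      else 0)"

definition bo_states :: "nat \<Rightarrow> nat \<Rightarrow> (nat \<times> nat) set" where
  "bo_states N1 N2 = {(n1, n2). n1 + n2 \<le> N1 + N2}"

text \<open>Transition rates of the bounded overflow model with parameter (k1,k2)
  (k_i = number of servers of P_i that P_{-i} may use).\<close>
definition bo_rate :: "nat \<Rightarrow> nat \<Rightarrow> real \<Rightarrow> real \<Rightarrow> real \<Rightarrow> real \<Rightarrow> real \<Rightarrow> real
    \<Rightarrow> nat \<times> nat \<Rightarrow> nat \<times> nat \<Rightarrow> real" where
  "bo_rate N1 N2 l1 l2 m1 m2 k1 k2 s t =
     (case s of (n1, n2) \<Rightarrow>
        if t = (Suc n1, n2) then l1 * adm N1 k2 n1 (n1 + n2) (N1 + N2)
        else if t = (n1, Suc n2) then l2 * adm N2 k1 n2 (n1 + n2) (N1 + N2)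
        else if 0 < n1 \<and> t = (n1 - 1, n2) then real n1 * m1
        else if 0 < n2 \<and> t = (n1, n2 - 1) then real n2 * m2
        else 0)"

definition bo_stationary :: "nat \<Rightarrow> nat \<Rightarrow> real \<Rightarrow> real \<Rightarrow> real \<Rightarrow> real \<Rightarrow> real \<Rightarrow> real
    \<Rightarrow> (nat \<times> nat \<Rightarrow> real) \<Rightarrow> bool" where
  "bo_stationary N1 N2 l1 l2 m1 m2 k1 k2 p \<longleftrightarrow>
     (\<forall>s. s \<notin> bo_states N1 N2 \<longrightarrow> p s = 0) \<and>
     (\<forall>s\<in>bo_states N1 N2. 0 \<le> p s) \<and>
     (\<Sum>s\<in>bo_states N1 N2. p s) = 1 \<and>
     (\<forall>s\<in>bo_states N1 N2.
        (\<Sum>t\<in>bo_states N1 N2 - {s}. p t * bo_rate N1 N2 l1 l2 m1 m2 k1 k2 t s)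
        = p s * (\<Sum>t\<in>bo_states N1 N2 - {s}. bo_rate N1 N2 l1 l2 m1 m2 k1 k2 s t))"

definition bo_pi :: "nat \<Rightarrow> nat \<Rightarrow> real \<Rightarrow> real \<Rightarrow> real \<Rightarrow> real \<Rightarrow> real \<Rightarrow> real
    \<Rightarrow> nat \<times> nat \<Rightarrow> real" where
  "bo_pi N1 N2 l1 l2 m1 m2 k1 k2 = (THE p. bo_stationary N1 N2 l1 l2 m1 m2 k1 k2 p)"

text \<open>Steady-state blocking probabilities B_1, B_2 (PASTA) for the configuration
  x = (x1,x2), i.e. (k1,k2) = (x1 N1, x2 N2).\<close>
definition B1 :: "nat \<Rightarrow> nat \<Rightarrow> real \<Rightarrow> real \<Rightarrow> real \<Rightarrow> real \<Rightarrow> real \<times> real \<Rightarrow> real" where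
  "B1 N1 N2 l1 l2 m1 m2 x =
     (let k1 = fst x * real N1; k2 = snd x * real N2;
          p = bo_pi N1 N2 l1 l2 m1 m2 k1 k2
      in \<Sum>s\<in>bo_states N1 N2. p s * (1 - adm N1 k2 (fst s) (fst s + snd s) (N1 + N2)))"

definition B2 :: "nat \<Rightarrow> nat \<Rightarrow> real \<Rightarrow> real \<Rightarrow> real \<Rightarrow> real \<Rightarrow> real \<times> real \<Rightarrow> real" where
  "B2 N1 N2 l1 l2 m1 m2 x =
     (let k1 = fst x * real N1; k2 = snd x * real N2;
          p = bo_pi N1 N2 l1 l2 m1 m2 k1 k2
      in \<Sum>s\<in>bo_states N1 N2. p s * (1 - adm N2 k1 (snd s) (fst s + snd s) (N1 + N2)))"

definition unit_square :: "(real \<times> real) set" where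
  "unit_square = {0..1} \<times> {0..1}"

definition QoS_stable :: "nat \<Rightarrow> nat \<Rightarrow> real \<Rightarrow> real \<Rightarrow> real \<Rightarrow> real \<Rightarrow> real \<times> real \<Rightarrow> bool" where
  "QoS_stable N1 N2 l1 l2 m1 m2 x \<longleftrightarrow>
     x \<in> unit_square \<and>
     B1 N1 N2 l1 l2 m1 m2 x < erlangB N1 (l1 / m1) \<and>
     B2 N1 N2 l1 l2 m1 m2 x < erlangB N2 (l2 / m2)"

definition pareto_set :: "nat \<Rightarrow> nat \<Rightarrow> real \<Rightarrow> real \<Rightarrow> real \<Rightarrow> real \<Rightarrow> (real \<times> real) set" where
  "pareto_set N1 N2 l1 l2 m1 m2 =
     {x. QoS_stable N1 N2 l1 l2 m1 m2 x \<and>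
         \<not> (\<exists>x'\<in>unit_square.
               B1 N1 N2 l1 l2 m1 m2 x' \<le> B1 N1 N2 l1 l2 m1 m2 x \<and>
               B2 N1 N2 l1 l2 m1 m2 x' \<le> B2 N1 N2 l1 l2 m1 m2 x \<and>
               (B1 N1 N2 l1 l2 m1 m2 x' < B1 N1 N2 l1 l2 m1 m2 x \<or>
                B2 N1 N2 l1 l2 m1 m2 x' < B2 N1 N2 l1 l2 m1 m2 x))}"

definition util_obj :: "nat \<Rightarrow> nat \<Rightarrow> real \<Rightarrow> real \<Rightarrow> real \<Rightarrow> real \<Rightarrow> real \<times> real \<Rightarrow> real" where
  "util_obj N1 N2 l1 l2 m1 m2 x =
     l1 / (l1 + l2) * B1 N1 N2 l1 l2 m1 m2 x + l2 / (l1 + l2) * B2 N1 N2 l1 l2 m1 m2 x"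

end

theory Submission
  imports Defs
begin


definition al :: "nat \<Rightarrow> real \<Rightarrow> nat \<Rightarrow> real" where
  "al N k n = (if n < N + nat \<lfloor>k\<rfloor> then 1 else if n = N + nat \<lfloor>k\<rfloor> then frac k else 0)"

lemma adm_al: "adm N k n tot C = (if tot < C then al N k n else 0)"
  by (simp add: adm_def al_def)

lemma al_nonneg: "0 \<le> al N k n"
  by (simp add: al_def frac_ge_0)

lemma al_le1: "al N k n \<le> 1"
  by (simp add: al_def frac_lt_1 less_imp_le)

lemma al_mono0: "al N k j = 0 \<Longrightarrow> j \<le> j' \<Longrightarrow> al N k j' = 0"
  by (auto simp: al_def split: if_splits)

locale bo =
  fixes N1 N2 :: nat and l1 l2 m1 m2 k1 k2 :: real
  assumes l1: "0 < l1" and l2: "0 < l2" and m1: "0 < m1" and m2: "0 < m2"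
begin

abbreviation "S \<equiv> bo_states N1 N2"
abbreviation "q \<equiv> bo_rate N1 N2 l1 l2 m1 m2 k1 k2"
definition "ad1 s = adm N1 k2 (fst s) (fst s + snd s) (N1 + N2)"
definition "ad2 s = adm N2 k1 (snd s) (fst s + snd s) (N1 + N2)"

lemma finS: "finite S"
proof -
  have "S \<subseteq> {..N1+N2} \<times> {..N1+N2}" by (auto simp: bo_states_def)
  then show ?thesis by (rule finite_subset) auto
qed

lemma q_out_pt: "q (n1, n2) t =
   (if t = (Suc n1, n2) then l1 * ad1 (n1,n2) else 0) +
   (if t = (n1, Suc n2) then l2 * ad2 (n1,n2) else 0) +
   (if 0 < n1 \<and> t = (n1 - 1, n2) then real n1 * m1 else 0) +
   (if 0 < n2 \<and> t = (n1, n2 - 1) then real n2 * m2 else 0)"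
proof -
  consider "t = (Suc n1, n2)" | "t = (n1, Suc n2)" | "0<n1 \<and> t = (n1-1,n2)" | "0<n2 \<and> t=(n1,n2-1)"
    | "t \<noteq> (Suc n1, n2)" "t \<noteq> (n1, Suc n2)" "\<not>(0<n1 \<and> t = (n1-1,n2))" "\<not>(0<n2 \<and> t=(n1,n2-1))" by blast
  then show ?thesis
  proof cases
    case 1 then show ?thesis by (auto simp add: bo_rate_def ad1_def)
  next
    case 2 then show ?thesis by (auto simp add: bo_rate_def ad2_def)
  next
    case 3 then show ?thesis by (auto simp add: bo_rate_def)
  next
    case 4 then show ?thesis by (auto simp add: bo_rate_def)
  next
    case 5 then show ?thesis by (auto simp add: bo_rate_def)
  qed
qed

lemma q_in_pt: "q t (n1, n2) =
   (if 0 < n1 \<and> t = (n1 - 1, n2) then l1 * ad1 t else 0) +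
   (if 0 < n2 \<and> t = (n1, n2 - 1) then l2 * ad2 t else 0) +
   (if t = (Suc n1, n2) then real (Suc n1) * m1 else 0) +
   (if t = (n1, Suc n2) then real (Suc n2) * m2 else 0)"
proof -
  consider "0<n1 \<and> t = (n1-1,n2)" | "0<n2 \<and> t=(n1,n2-1)" | "t = (Suc n1, n2)" | "t = (n1, Suc n2)" 
    | "t \<noteq> (Suc n1, n2)" "t \<noteq> (n1, Suc n2)" "\<not>(0<n1 \<and> t = (n1-1,n2))" "\<not>(0<n2 \<and> t=(n1,n2-1))" by blast
  then show ?thesis
  proof cases
    case 1 then show ?thesis by (auto simp add: bo_rate_def ad1_def)
  next
    case 2 then show ?thesis by (auto simp add: bo_rate_def ad2_def)
  next
    case 3 then show ?thesis by (auto simp add: bo_rate_def)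
  next
    case 4 then show ?thesis by (auto simp add: bo_rate_def)
  next
    case 5
    obtain a b where t: "t = (a, b)" by (cases t)
    have c1: "(n1, n2) \<noteq> (Suc a, b)" using 5 t by auto
    have c2: "(n1, n2) \<noteq> (a, Suc b)" using 5 t by auto
    have c3: "\<not> (0 < a \<and> (n1, n2) = (a - 1, b))" using 5 t by auto
    have c4: "\<not> (0 < b \<and> (n1, n2) = (a, b - 1))" using 5 t by auto
    have q0: "q t (n1, n2) = 0" unfolding t bo_rate_def prod.case
      using c1 c2 c3 c4 by (simp only: if_False)
    show ?thesis using 5 by (simp only: q0 if_False add_0_right)
  qed
qed

lemma ad1_0: "\<not> fst s + snd s < N1 + N2 \<Longrightarrow> ad1 s = 0"
  by (simp add: ad1_def adm_def)
lemma ad2_0: "\<not> fst s + snd s < N1 + N2 \<Longrightarrow> ad2 s = 0"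
  by (simp add: ad2_def adm_def)

lemma out_sum:
  assumes "(n1, n2) \<in> S"
  shows "(\<Sum>t\<in>S - {(n1,n2)}. q (n1,n2) t) =
    l1 * ad1 (n1,n2) + l2 * ad2 (n1,n2) + real n1 * m1 + real n2 * m2"
proof -
  have f: "finite (S - {(n1,n2)})" using finS by auto
  have e1: "(\<Sum>t\<in>S - {(n1,n2)}. (if t = (Suc n1, n2) then l1 * ad1 (n1,n2) else 0)) = l1 * ad1 (n1,n2)"
    using f assms by (auto simp: bo_states_def ad1_0)
  have e2: "(\<Sum>t\<in>S - {(n1,n2)}. (if t = (n1, Suc n2) then l2 * ad2 (n1,n2) else 0)) = l2 * ad2 (n1,n2)"
    using f assms by (auto simp: bo_states_def ad2_0)
  have e3: "(\<Sum>t\<in>S - {(n1,n2)}. (if 0 < n1 \<and> t = (n1 - 1, n2) then real n1 * m1 else 0)) = real n1 * m1"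
  proof (cases "0 < n1")
    case True
    then have "(\<Sum>t\<in>S - {(n1,n2)}. (if 0 < n1 \<and> t = (n1 - 1, n2) then real n1 * m1 else 0))
       = (\<Sum>t\<in>S - {(n1,n2)}. (if t = (n1 - 1, n2) then real n1 * m1 else 0))" by simp
    also have "\<dots> = real n1 * m1" using f assms True by (auto simp: bo_states_def)
    finally show ?thesis .
  qed simp
  have e4: "(\<Sum>t\<in>S - {(n1,n2)}. (if 0 < n2 \<and> t = (n1, n2 - 1) then real n2 * m2 else 0)) = real n2 * m2"
  proof (cases "0 < n2")
    case True
    then have "(\<Sum>t\<in>S - {(n1,n2)}. (if 0 < n2 \<and> t = (n1, n2 - 1) then real n2 * m2 else 0))
       = (\<Sum>t\<in>S - {(n1,n2)}. (if t = (n1, n2 - 1) then real n2 * m2 else 0))" by simp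
    also have "\<dots> = real n2 * m2" using f assms True by (auto simp: bo_states_def)
    finally show ?thesis .
  qed simp
  show ?thesis unfolding q_out_pt sum.distrib e1 e2 e3 e4 ..
qed

lemma in_sum:
  assumes "(n1, n2) \<in> S" and p0: "\<And>s. s \<notin> S \<Longrightarrow> p s = 0"
  shows "(\<Sum>t\<in>S - {(n1,n2)}. p t * q t (n1,n2)) =
    (if 0 < n1 then p (n1 - 1, n2) * (l1 * ad1 (n1 - 1, n2)) else 0) +
    (if 0 < n2 then p (n1, n2 - 1) * (l2 * ad2 (n1, n2 - 1)) else 0) +
    p (Suc n1, n2) * (real (Suc n1) * m1) + p (n1, Suc n2) * (real (Suc n2) * m2)"
proof -
  have f: "finite (S - {(n1,n2)})" using finS by auto
  have e1: "(\<Sum>t\<in>S - {(n1,n2)}. p t * (if 0 < n1 \<and> t = (n1 - 1, n2) then l1 * ad1 t else 0))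
     = (if 0 < n1 then p (n1 - 1, n2) * (l1 * ad1 (n1 - 1, n2)) else 0)"
  proof (cases "0 < n1")
    case True
    then have "(\<Sum>t\<in>S - {(n1,n2)}. p t * (if 0 < n1 \<and> t = (n1 - 1, n2) then l1 * ad1 t else 0))
       = (\<Sum>t\<in>S - {(n1,n2)}. (if t = (n1 - 1, n2) then p (n1 - 1, n2) * (l1 * ad1 (n1 - 1, n2)) else 0))"
      by (intro sum.cong) auto
    also have "\<dots> = p (n1 - 1, n2) * (l1 * ad1 (n1 - 1, n2))" using f assms True by (auto simp: bo_states_def)
    finally show ?thesis using True by simp
  qed simp
  have e2: "(\<Sum>t\<in>S - {(n1,n2)}. p t * (if 0 < n2 \<and> t = (n1, n2 - 1) then l2 * ad2 t else 0))
     = (if 0 < n2 then p (n1, n2 - 1) * (l2 * ad2 (n1, n2 - 1)) else 0)"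
  proof (cases "0 < n2")
    case True
    then have "(\<Sum>t\<in>S - {(n1,n2)}. p t * (if 0 < n2 \<and> t = (n1, n2 - 1) then l2 * ad2 t else 0))
       = (\<Sum>t\<in>S - {(n1,n2)}. (if t = (n1, n2 - 1) then p (n1, n2 - 1) * (l2 * ad2 (n1, n2 - 1)) else 0))"
      by (intro sum.cong) auto
    also have "\<dots> = p (n1, n2 - 1) * (l2 * ad2 (n1, n2 - 1))" using f assms True by (auto simp: bo_states_def)
    finally show ?thesis using True by simp
  qed simp
  have e3: "(\<Sum>t\<in>S - {(n1,n2)}. p t * (if t = (Suc n1, n2) then real (Suc n1) * m1 else 0))
     = p (Suc n1, n2) * (real (Suc n1) * m1)"
  proof -
    have "(\<Sum>t\<in>S - {(n1,n2)}. p t * (if t = (Suc n1, n2) then real (Suc n1) * m1 else 0))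
       = (\<Sum>t\<in>S - {(n1,n2)}. (if t = (Suc n1, n2) then p (Suc n1, n2) * (real (Suc n1) * m1) else 0))"
      by (intro sum.cong) auto
    also have "\<dots> = p (Suc n1, n2) * (real (Suc n1) * m1)" using f p0[of "(Suc n1, n2)"] by auto
    finally show ?thesis .
  qed
  have e4: "(\<Sum>t\<in>S - {(n1,n2)}. p t * (if t = (n1, Suc n2) then real (Suc n2) * m2 else 0))
     = p (n1, Suc n2) * (real (Suc n2) * m2)"
  proof -
    have "(\<Sum>t\<in>S - {(n1,n2)}. p t * (if t = (n1, Suc n2) then real (Suc n2) * m2 else 0))
       = (\<Sum>t\<in>S - {(n1,n2)}. (if t = (n1, Suc n2) then p (n1, Suc n2) * (real (Suc n2) * m2) else 0))"
      by (intro sum.cong) auto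
    also have "\<dots> = p (n1, Suc n2) * (real (Suc n2) * m2)" using f p0[of "(n1, Suc n2)"] by auto
    finally show ?thesis .
  qed
  show ?thesis unfolding q_in_pt distrib_left sum.distrib e1 e2 e3 e4 ..
qed


definition "a1 = l1 / m1"
definition "a2 = l2 / m2"
definition "ph1 n = (\<Prod>j<n. al N1 k2 j)"
definition "ph2 n = (\<Prod>j<n. al N2 k1 j)"
definition "F1 n = a1 ^ n / fact n * ph1 n"
definition "F2 n = a2 ^ n / fact n * ph2 n"
definition "w s = (if s \<in> S then F1 (fst s) * F2 (snd s) else 0)"
definition "Z = (\<Sum>s\<in>S. w s)"
definition "pp s = w s / Z"

lemma a1_pos: "0 < a1" using l1 m1 by (simp add: a1_def)
lemma a2_pos: "0 < a2" using l2 m2 by (simp add: a2_def)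

lemma ph1_nonneg: "0 \<le> ph1 n" unfolding ph1_def by (intro prod_nonneg) (simp add: al_nonneg)
lemma ph2_nonneg: "0 \<le> ph2 n" unfolding ph2_def by (intro prod_nonneg) (simp add: al_nonneg)
lemma F1_nonneg: "0 \<le> F1 n" unfolding F1_def using a1_pos ph1_nonneg by simp
lemma F2_nonneg: "0 \<le> F2 n" unfolding F2_def using a2_pos ph2_nonneg by simp
lemma w_nonneg: "0 \<le> w s" unfolding w_def using F1_nonneg F2_nonneg by simp
lemma w00: "w (0,0) = 1" by (simp add: w_def F1_def F2_def ph1_def ph2_def bo_states_def)

lemma Z_pos: "0 < Z"
proof -
  have m: "(0,0) \<in> S" by (simp add: bo_states_def)
  have "w (0,0) \<le> Z" unfolding Z_def
    using member_le_sum[OF m, of w] w_nonneg finS by simp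
  then show ?thesis using w00 by simp
qed

lemma pp_nonneg: "0 \<le> pp s" unfolding pp_def using w_nonneg Z_pos by simp
lemma pp_out: "s \<notin> S \<Longrightarrow> pp s = 0" by (simp add: pp_def w_def)
lemma pp_sum: "(\<Sum>s\<in>S. pp s) = 1"
  unfolding pp_def sum_divide_distrib[symmetric] Z_def[symmetric] using Z_pos by simp
lemma pp00: "0 < pp (0,0)" unfolding pp_def using w00 Z_pos by simp

lemma ad1_nonneg: "0 \<le> ad1 s" by (simp add: ad1_def adm_al al_nonneg)
lemma ad2_nonneg: "0 \<le> ad2 s" by (simp add: ad2_def adm_al al_nonneg)

lemma F1_Suc: "F1 (Suc n) * (real (Suc n) * m1) = F1 n * (l1 * al N1 k2 n)"
proof -
  have fs: "fact (Suc n) = (real n + 1) * (fact n :: real)" by simp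
  have p1: "(0::real) < fact n * (1 + real n)" by (intro mult_pos_pos) auto
  have nz: "fact n + fact n * real n \<noteq> (0::real)" "(real n + 1) * fact n \<noteq> (0::real)"
    using p1 by (simp_all add: algebra_simps)
  have "F1 (Suc n) * (real (Suc n) * m1) = a1 ^ n / fact n * ph1 n * (a1 * m1) * al N1 k2 n"
    unfolding F1_def ph1_def prod.lessThan_Suc fs power_Suc using nz by (simp add: field_simps)
  also have "a1 * m1 = l1" using m1 by (simp add: a1_def)
  finally show ?thesis unfolding F1_def by simp
qed

lemma F2_Suc: "F2 (Suc n) * (real (Suc n) * m2) = F2 n * (l2 * al N2 k1 n)"
proof -
  have fs: "fact (Suc n) = (real n + 1) * (fact n :: real)" by simp
  have p1: "(0::real) < fact n * (1 + real n)" by (intro mult_pos_pos) auto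
  have nz: "fact n + fact n * real n \<noteq> (0::real)" "(real n + 1) * fact n \<noteq> (0::real)"
    using p1 by (simp_all add: algebra_simps)
  have "F2 (Suc n) * (real (Suc n) * m2) = a2 ^ n / fact n * ph2 n * (a2 * m2) * al N2 k1 n"
    unfolding F2_def ph2_def prod.lessThan_Suc fs power_Suc using nz by (simp add: field_simps)
  also have "a2 * m2 = l2" using m2 by (simp add: a2_def)
  finally show ?thesis unfolding F2_def by simp
qed

lemma DB1: "pp (Suc n1, n2) * (real (Suc n1) * m1) = pp (n1, n2) * (l1 * ad1 (n1, n2))"
proof (cases "n1 + n2 < N1 + N2")
  case True
  have inS: "(Suc n1, n2) \<in> S" "(n1, n2) \<in> S" using True by (auto simp: bo_states_def)
  have "w (Suc n1, n2) * (real (Suc n1) * m1) = F2 n2 * (F1 (Suc n1) * (real (Suc n1) * m1))"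
    using inS by (simp add: w_def mult_ac)
  also have "\<dots> = F2 n2 * (F1 n1 * (l1 * al N1 k2 n1))" by (simp only: F1_Suc)
  also have "\<dots> = w (n1, n2) * (l1 * ad1 (n1, n2))"
    using inS True by (simp add: w_def ad1_def adm_al mult_ac)
  finally have "w (Suc n1, n2) * (real (Suc n1) * m1) = w (n1, n2) * (l1 * ad1 (n1, n2))" .
  then show ?thesis unfolding pp_def by (simp add: field_simps)
next
  case False
  then show ?thesis by (simp add: ad1_0 pp_out bo_states_def)
qed

lemma DB2: "pp (n1, Suc n2) * (real (Suc n2) * m2) = pp (n1, n2) * (l2 * ad2 (n1, n2))"
proof (cases "n1 + n2 < N1 + N2")
  case True
  have inS: "(n1, Suc n2) \<in> S" "(n1, n2) \<in> S" using True by (auto simp: bo_states_def)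
  have "w (n1, Suc n2) * (real (Suc n2) * m2) = F1 n1 * (F2 (Suc n2) * (real (Suc n2) * m2))"
    using inS by (simp add: w_def mult_ac)
  also have "\<dots> = F1 n1 * (F2 n2 * (l2 * al N2 k1 n2))" by (simp only: F2_Suc)
  also have "\<dots> = w (n1, n2) * (l2 * ad2 (n1, n2))"
    using inS True by (simp add: w_def ad2_def adm_al mult_ac)
  finally have "w (n1, Suc n2) * (real (Suc n2) * m2) = w (n1, n2) * (l2 * ad2 (n1, n2))" .
  then show ?thesis unfolding pp_def by (simp add: field_simps)
next
  case False
  then show ?thesis by (simp add: ad2_0 pp_out bo_states_def)
qed

lemma DB1': "0 < n1 \<Longrightarrow> pp (n1 - 1, n2) * (l1 * ad1 (n1 - 1, n2)) = pp (n1, n2) * (real n1 * m1)"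
  using DB1[of "n1 - 1" n2] by simp

lemma DB2': "0 < n2 \<Longrightarrow> pp (n1, n2 - 1) * (l2 * ad2 (n1, n2 - 1)) = pp (n1, n2) * (real n2 * m2)"
  using DB2[of n1 "n2 - 1"] by simp

lemma pp_stationary: "bo_stationary N1 N2 l1 l2 m1 m2 k1 k2 pp"
  unfolding bo_stationary_def
proof (intro conjI ballI allI impI)
  fix s assume "s \<notin> S" then show "pp s = 0" by (rule pp_out)
next
  fix s show "0 \<le> pp s" by (rule pp_nonneg)
next
  show "(\<Sum>s\<in>S. pp s) = 1" by (rule pp_sum)
next
  fix s assume sS: "s \<in> S"
  obtain n1 n2 where s: "s = (n1, n2)" by (cases s)
  have "(\<Sum>t\<in>S - {s}. pp t * q t s) =
    (if 0 < n1 then pp (n1 - 1, n2) * (l1 * ad1 (n1 - 1, n2)) else 0) +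
    (if 0 < n2 then pp (n1, n2 - 1) * (l2 * ad2 (n1, n2 - 1)) else 0) +
    pp (Suc n1, n2) * (real (Suc n1) * m1) + pp (n1, Suc n2) * (real (Suc n2) * m2)"
    unfolding s by (rule in_sum) (use sS s pp_out in auto)
  also have "\<dots> = pp s * (l1 * ad1 (n1,n2) + l2 * ad2 (n1,n2) + real n1 * m1 + real n2 * m2)"
  proof -
    have t1: "(if 0 < n1 then pp (n1 - 1, n2) * (l1 * ad1 (n1 - 1, n2)) else 0) = pp (n1, n2) * (real n1 * m1)"
      using DB1'[of n1 n2] by simp
    have t2: "(if 0 < n2 then pp (n1, n2 - 1) * (l2 * ad2 (n1, n2 - 1)) else 0) = pp (n1, n2) * (real n2 * m2)"
      using DB2'[of n2 n1] by simp
    show ?thesis unfolding s DB1 DB2 t1 t2 by (simp add: algebra_simps)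
  qed
  also have "\<dots> = pp s * (\<Sum>t\<in>S - {s}. q s t)"
    unfolding s using out_sum sS s by simp
  finally show "(\<Sum>t\<in>S - {s}. pp t * q t s) = pp s * (\<Sum>t\<in>S - {s}. q s t)" .
qed


lemma q_nonneg: "0 \<le> q s t"
proof -
  obtain n1 n2 where s: "s = (n1, n2)" by (cases s)
  show ?thesis unfolding s q_out_pt using l1 l2 m1 m2 ad1_nonneg[of "(n1,n2)"] ad2_nonneg[of "(n1,n2)"]
    by simp
qed

lemma qcut1:
  assumes "al N1 k2 j = 0" "j < fst s" "fst t \<le> j"
  shows "q t s = 0"
proof -
  obtain n1 n2 where s: "s = (n1, n2)" by (cases s)
  have "ad1 t = 0" if H: "0 < n1 \<and> t = (n1 - 1, n2)"
  proof -
    have "n1 - 1 = j" using H assms s by auto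
    then show ?thesis using H assms by (simp add: ad1_def adm_al)
  qed
  then show ?thesis unfolding s q_in_pt using assms s by auto
qed

lemma qcut2:
  assumes "al N2 k1 j = 0" "j < snd s" "snd t \<le> j"
  shows "q t s = 0"
proof -
  obtain n1 n2 where s: "s = (n1, n2)" by (cases s)
  have "ad2 t = 0" if H: "0 < n2 \<and> t = (n1, n2 - 1)"
  proof -
    have "n2 - 1 = j" using H assms s by auto
    then show ?thesis using H assms by (simp add: ad2_def adm_al)
  qed
  then show ?thesis unfolding s q_in_pt using assms s by auto
qed

lemma q_down1: "q (Suc j, n2) (j, n2) = real (Suc j) * m1"
  unfolding q_out_pt by simp
lemma q_down2: "q (n1, Suc j) (n1, j) = real (Suc j) * m2"
  unfolding q_out_pt by simp

end

lemma flow_cut: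
  fixes g :: "'a \<Rightarrow> 'a \<Rightarrow> real"
  assumes fin: "finite S" and AS: "A \<subseteq> S"
  shows "(\<Sum>s\<in>A. \<Sum>t\<in>S-{s}. g t s) - (\<Sum>s\<in>A. \<Sum>t\<in>S-{s}. g s t)
       = (\<Sum>s\<in>A. \<Sum>t\<in>S-A. g t s) - (\<Sum>s\<in>A. \<Sum>t\<in>S-A. g s t)"
proof -
  have finA: "finite A" using fin AS finite_subset by blast
  have split: "(\<Sum>t\<in>S-{s}. f t) = (\<Sum>t\<in>A. if t = s then 0 else f t) + (\<Sum>t\<in>S-A. f t)"
    if "s \<in> A" for s and f :: "'a \<Rightarrow> real"
  proof -
    have "S - {s} = (A - {s}) \<union> (S - A)" using that AS by auto
    then have "(\<Sum>t\<in>S-{s}. f t) = (\<Sum>t\<in>A-{s}. f t) + (\<Sum>t\<in>S-A. f t)"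
      using fin finA by (simp only:) (rule sum.union_disjoint, auto)
    also have "(\<Sum>t\<in>A-{s}. f t) = (\<Sum>t\<in>A. if t = s then 0 else f t)"
      using finA that by (simp add: sum.If_cases Diff_eq Int_commute)
    finally show ?thesis .
  qed
  have sw: "(\<Sum>s\<in>A. \<Sum>t\<in>A. if t = s then 0 else g t s) = (\<Sum>s\<in>A. \<Sum>t\<in>A. if t = s then 0 else g s t)"
    by (subst sum.swap) (intro sum.cong refl, auto)
  have "(\<Sum>s\<in>A. \<Sum>t\<in>S-{s}. g t s) = (\<Sum>s\<in>A. \<Sum>t\<in>A. if t = s then 0 else g t s) + (\<Sum>s\<in>A. \<Sum>t\<in>S-A. g t s)"
    by (simp add: split sum.distrib cong: sum.cong)
  moreover have "(\<Sum>s\<in>A. \<Sum>t\<in>S-{s}. g s t) = (\<Sum>s\<in>A. \<Sum>t\<in>A. if t = s then 0 else g s t) + (\<Sum>s\<in>A. \<Sum>t\<in>S-A. g s t)"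
    by (simp add: split sum.distrib cong: sum.cong)
  ultimately show ?thesis using sw by simp
qed

context bo begin

context
  fixes p assumes st: "bo_stationary N1 N2 l1 l2 m1 m2 k1 k2 p"
begin

lemma p_out: "s \<notin> S \<Longrightarrow> p s = 0" using st unfolding bo_stationary_def by blast
lemma p_nonneg: "0 \<le> p s"
proof (cases "s \<in> S")
  case True then show ?thesis using st unfolding bo_stationary_def by blast
next
  case False then show ?thesis using p_out by simp
qed
lemma p_sum: "(\<Sum>s\<in>S. p s) = 1" using st by (simp add: bo_stationary_def)
lemma p_bal: "s \<in> S \<Longrightarrow> (\<Sum>t\<in>S - {s}. p t * q t s) = p s * (\<Sum>t\<in>S - {s}. q s t)"
  using st by (simp add: bo_stationary_def)

lemma cut_gen:
  assumes AS: "A \<subseteq> S"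
  shows "(\<Sum>s\<in>A. \<Sum>t\<in>S-A. p t * q t s) = (\<Sum>s\<in>A. \<Sum>t\<in>S-A. p s * q s t)"
proof -
  have "(\<Sum>s\<in>A. \<Sum>t\<in>S-{s}. p t * q t s) = (\<Sum>s\<in>A. \<Sum>t\<in>S-{s}. p s * q s t)"
  proof (rule sum.cong[OF refl])
    fix s assume "s \<in> A"
    then have "s \<in> S" using AS by auto
    then have "(\<Sum>t\<in>S-{s}. p t * q t s) = p s * (\<Sum>t\<in>S - {s}. q s t)" by (rule p_bal)
    then show "(\<Sum>t\<in>S-{s}. p t * q t s) = (\<Sum>t\<in>S-{s}. p s * q s t)" by (simp add: sum_distrib_left)
  qed
  then show ?thesis using flow_cut[OF finS AS, of "\<lambda>t s. p t * q t s"] by simp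
qed

lemma cut1:
  assumes "al N1 k2 j = 0"
  shows "p (Suc j, n2) = 0"
proof (cases "(Suc j, n2) \<in> S")
  case False then show ?thesis by (rule p_out)
next
  case True
  define A where "A = {s\<in>S. j < fst s}"
  have AS: "A \<subseteq> S" by (auto simp: A_def)
  have finA: "finite A" using AS finS finite_subset by blast
  have "(\<Sum>s\<in>A. \<Sum>t\<in>S-A. p t * q t s) = 0"
    by (intro sum.neutral ballI) (auto simp: A_def qcut1[OF assms])
  then have z: "(\<Sum>s\<in>A. \<Sum>t\<in>S-A. p s * q s t) = 0" using cut_gen[OF AS] by simp
  have sA: "(Suc j, n2) \<in> A" using True by (simp add: A_def)
  have tA: "(j, n2) \<in> S - A" using True by (auto simp: A_def bo_states_def)
  have "p (Suc j, n2) * q (Suc j, n2) (j, n2) \<le> (\<Sum>t\<in>S-A. p (Suc j, n2) * q (Suc j, n2) t)"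
    by (rule member_le_sum[OF tA]) (use finS p_nonneg q_nonneg in auto)
  also have "\<dots> \<le> (\<Sum>s\<in>A. \<Sum>t\<in>S-A. p s * q s t)"
    by (rule member_le_sum[OF sA, of "\<lambda>s. \<Sum>t\<in>S-A. p s * q s t"])
       (use finA p_nonneg q_nonneg in \<open>auto intro!: sum_nonneg\<close>)
  finally have "p (Suc j, n2) * (real (Suc j) * m1) \<le> 0" using z q_down1 by simp
  then show ?thesis using p_nonneg[of "(Suc j, n2)"] m1
    by (simp add: mult_le_0_iff zero_less_mult_iff)
qed

lemma cut2:
  assumes "al N2 k1 j = 0"
  shows "p (n1, Suc j) = 0"
proof (cases "(n1, Suc j) \<in> S")
  case False then show ?thesis by (rule p_out)
next
  case True
  define A where "A = {s\<in>S. j < snd s}"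
  have AS: "A \<subseteq> S" by (auto simp: A_def)
  have finA: "finite A" using AS finS finite_subset by blast
  have "(\<Sum>s\<in>A. \<Sum>t\<in>S-A. p t * q t s) = 0"
    by (intro sum.neutral ballI) (auto simp: A_def qcut2[OF assms])
  then have z: "(\<Sum>s\<in>A. \<Sum>t\<in>S-A. p s * q s t) = 0" using cut_gen[OF AS] by simp
  have sA: "(n1, Suc j) \<in> A" using True by (simp add: A_def)
  have tA: "(n1, j) \<in> S - A" using True by (auto simp: A_def bo_states_def)
  have "p (n1, Suc j) * q (n1, Suc j) (n1, j) \<le> (\<Sum>t\<in>S-A. p (n1, Suc j) * q (n1, Suc j) t)"
    by (rule member_le_sum[OF tA]) (use finS p_nonneg q_nonneg in auto)
  also have "\<dots> \<le> (\<Sum>s\<in>A. \<Sum>t\<in>S-A. p s * q s t)"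
    by (rule member_le_sum[OF sA, of "\<lambda>s. \<Sum>t\<in>S-A. p s * q s t"])
       (use finA p_nonneg q_nonneg in \<open>auto intro!: sum_nonneg\<close>)
  finally have "p (n1, Suc j) * (real (Suc j) * m2) \<le> 0" using z q_down2 by simp
  then show ?thesis using p_nonneg[of "(n1, Suc j)"] m2
    by (simp add: mult_le_0_iff zero_less_mult_iff)
qed

lemma offsupp:
  assumes "pp s = 0"
  shows "p s = 0"
proof (cases "s \<in> S")
  case False then show ?thesis by (rule p_out)
next
  case True
  obtain n1 n2 where s: "s = (n1, n2)" by (cases s)
  have "w s = 0" using assms Z_pos by (simp add: pp_def)
  then have "F1 n1 = 0 \<or> F2 n2 = 0" using True s by (simp add: w_def)
  then have "ph1 n1 = 0 \<or> ph2 n2 = 0" using a1_pos a2_pos by (simp add: F1_def F2_def)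
  then show ?thesis
  proof
    assume "ph1 n1 = 0"
    then obtain j where j: "j < n1" "al N1 k2 j = 0" by (auto simp: ph1_def prod_zero_iff)
    then have "al N1 k2 (n1 - 1) = 0" using al_mono0[OF j(2), of "n1 - 1"] by simp
    then have "p (Suc (n1 - 1), n2) = 0" by (rule cut1)
    then show ?thesis using s j by simp
  next
    assume "ph2 n2 = 0"
    then obtain j where j: "j < n2" "al N2 k1 j = 0" by (auto simp: ph2_def prod_zero_iff)
    then have "al N2 k1 (n2 - 1) = 0" using al_mono0[OF j(2), of "n2 - 1"] by simp
    then have "p (n1, Suc (n2 - 1)) = 0" by (rule cut2)
    then show ?thesis using s j by simp
  qed
qed


definition "h t = p t / pp t"

lemma p_h: "p t = h t * pp t"
proof (cases "pp t = 0")
  case True then show ?thesis using offsupp by simp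
next
  case False then show ?thesis by (simp add: h_def)
qed

lemma harm:
  assumes sS: "(n1, n2) \<in> S" and pos: "0 < pp (n1, n2)"
  shows "real n1 * m1 * (h (n1 - 1, n2) - h (n1, n2)) + real n2 * m2 * (h (n1, n2 - 1) - h (n1, n2))
       + l1 * ad1 (n1, n2) * (h (Suc n1, n2) - h (n1, n2)) + l2 * ad2 (n1, n2) * (h (n1, Suc n2) - h (n1, n2)) = 0"
proof -
  let ?s = "(n1, n2)"
  have "(\<Sum>t\<in>S - {?s}. p t * q t ?s) =
    (if 0 < n1 then p (n1 - 1, n2) * (l1 * ad1 (n1 - 1, n2)) else 0) +
    (if 0 < n2 then p (n1, n2 - 1) * (l2 * ad2 (n1, n2 - 1)) else 0) +
    p (Suc n1, n2) * (real (Suc n1) * m1) + p (n1, Suc n2) * (real (Suc n2) * m2)"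
    by (rule in_sum[OF sS]) (rule p_out)
  also have "\<dots> = pp ?s * (h (n1 - 1, n2) * (real n1 * m1) + h (n1, n2 - 1) * (real n2 * m2)
      + h (Suc n1, n2) * (l1 * ad1 ?s) + h (n1, Suc n2) * (l2 * ad2 ?s))"
  proof -
    have t1: "(if 0 < n1 then p (n1 - 1, n2) * (l1 * ad1 (n1 - 1, n2)) else 0) = pp ?s * (h (n1 - 1, n2) * (real n1 * m1))"
    proof (cases "0 < n1")
      case True
      have "p (n1 - 1, n2) * (l1 * ad1 (n1 - 1, n2)) = h (n1 - 1, n2) * (pp (n1 - 1, n2) * (l1 * ad1 (n1 - 1, n2)))"
        by (subst p_h[of "(n1 - 1, n2)"]) (simp add: algebra_simps)
      also have "\<dots> = pp ?s * (h (n1 - 1, n2) * (real n1 * m1))" using DB1'[OF True, of n2] by simp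
      finally show ?thesis using True by simp
    qed simp
    have t2: "(if 0 < n2 then p (n1, n2 - 1) * (l2 * ad2 (n1, n2 - 1)) else 0) = pp ?s * (h (n1, n2 - 1) * (real n2 * m2))"
    proof (cases "0 < n2")
      case True
      have "p (n1, n2 - 1) * (l2 * ad2 (n1, n2 - 1)) = h (n1, n2 - 1) * (pp (n1, n2 - 1) * (l2 * ad2 (n1, n2 - 1)))"
        by (subst p_h[of "(n1, n2 - 1)"]) (simp add: algebra_simps)
      also have "\<dots> = pp ?s * (h (n1, n2 - 1) * (real n2 * m2))" using DB2'[OF True, of n1] by simp
      finally show ?thesis using True by simp
    qed simp
    have t3: "p (Suc n1, n2) * (real (Suc n1) * m1) = pp ?s * (h (Suc n1, n2) * (l1 * ad1 ?s))"
    proof -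
      have "p (Suc n1, n2) * (real (Suc n1) * m1) = h (Suc n1, n2) * (pp (Suc n1, n2) * (real (Suc n1) * m1))"
        by (subst p_h[of "(Suc n1, n2)"]) (simp add: algebra_simps)
      also have "\<dots> = pp ?s * (h (Suc n1, n2) * (l1 * ad1 ?s))" unfolding DB1 by (simp add: algebra_simps)
      finally show ?thesis .
    qed
    have t4: "p (n1, Suc n2) * (real (Suc n2) * m2) = pp ?s * (h (n1, Suc n2) * (l2 * ad2 ?s))"
    proof -
      have "p (n1, Suc n2) * (real (Suc n2) * m2) = h (n1, Suc n2) * (pp (n1, Suc n2) * (real (Suc n2) * m2))"
        by (subst p_h[of "(n1, Suc n2)"]) (simp add: algebra_simps)
      also have "\<dots> = pp ?s * (h (n1, Suc n2) * (l2 * ad2 ?s))" unfolding DB2 by (simp add: algebra_simps)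
      finally show ?thesis .
    qed
    show ?thesis unfolding t1 t2 t3 t4 by (simp add: algebra_simps)
  qed
  finally have L: "(\<Sum>t\<in>S - {?s}. p t * q t ?s) = pp ?s * (h (n1 - 1, n2) * (real n1 * m1) + h (n1, n2 - 1) * (real n2 * m2)
      + h (Suc n1, n2) * (l1 * ad1 ?s) + h (n1, Suc n2) * (l2 * ad2 ?s))" .
  have R: "p ?s * (\<Sum>t\<in>S - {?s}. q ?s t) = pp ?s * (h ?s * (l1 * ad1 ?s + l2 * ad2 ?s + real n1 * m1 + real n2 * m2))"
    unfolding out_sum[OF sS] p_h[of ?s] by simp
  have "pp ?s * (h (n1 - 1, n2) * (real n1 * m1) + h (n1, n2 - 1) * (real n2 * m2)
      + h (Suc n1, n2) * (l1 * ad1 ?s) + h (n1, Suc n2) * (l2 * ad2 ?s))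
      = pp ?s * (h ?s * (l1 * ad1 ?s + l2 * ad2 ?s + real n1 * m1 + real n2 * m2))"
    using p_bal[OF sS] unfolding L R .
  then have "h (n1 - 1, n2) * (real n1 * m1) + h (n1, n2 - 1) * (real n2 * m2)
      + h (Suc n1, n2) * (l1 * ad1 ?s) + h (n1, Suc n2) * (l2 * ad2 ?s)
      = h ?s * (l1 * ad1 ?s + l2 * ad2 ?s + real n1 * m1 + real n2 * m2)"
    using pos by simp
  then show ?thesis by (simp add: algebra_simps)
qed


lemma R_down1: assumes "0 < pp (n1, n2)" "0 < n1" shows "0 < pp (n1 - 1, n2) \<and> 0 < ad1 (n1 - 1, n2)"
proof -
  have "0 < pp (n1, n2) * (real n1 * m1)" using assms m1 by simp
  then have "0 < pp (n1 - 1, n2) * (l1 * ad1 (n1 - 1, n2))" using DB1'[OF assms(2)] by simp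
  then have a: "pp (n1 - 1, n2) \<noteq> 0" and b: "ad1 (n1 - 1, n2) \<noteq> 0" by auto
  then show ?thesis using pp_nonneg[of "(n1 - 1, n2)"] ad1_nonneg[of "(n1 - 1, n2)"] by linarith
qed

lemma R_down2: assumes "0 < pp (n1, n2)" "0 < n2" shows "0 < pp (n1, n2 - 1) \<and> 0 < ad2 (n1, n2 - 1)"
proof -
  have "0 < pp (n1, n2) * (real n2 * m2)" using assms m2 by simp
  then have "0 < pp (n1, n2 - 1) * (l2 * ad2 (n1, n2 - 1))" using DB2'[OF assms(2)] by simp
  then have a: "pp (n1, n2 - 1) \<noteq> 0" and b: "ad2 (n1, n2 - 1) \<noteq> 0" by auto
  then show ?thesis using pp_nonneg[of "(n1, n2 - 1)"] ad2_nonneg[of "(n1, n2 - 1)"] by linarith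
qed

lemma R_up1: assumes "0 < pp (n1, n2)" "0 < ad1 (n1, n2)" shows "0 < pp (Suc n1, n2)"
proof -
  have "0 < pp (n1, n2) * (l1 * ad1 (n1, n2))" using assms l1 by simp
  then have "0 < pp (Suc n1, n2) * (real (Suc n1) * m1)" using DB1[of n1 n2] by simp
  then have a: "pp (Suc n1, n2) \<noteq> 0" by auto
  then show ?thesis using pp_nonneg[of "(Suc n1, n2)"] by linarith
qed

lemma R_up2: assumes "0 < pp (n1, n2)" "0 < ad2 (n1, n2)" shows "0 < pp (n1, Suc n2)"
proof -
  have "0 < pp (n1, n2) * (l2 * ad2 (n1, n2))" using assms l2 by simp
  then have "0 < pp (n1, Suc n2) * (real (Suc n2) * m2)" using DB2[of n1 n2] by simp
  then have a: "pp (n1, Suc n2) \<noteq> 0" by auto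
  then show ?thesis using pp_nonneg[of "(n1, Suc n2)"] by linarith
qed

lemma R_S: assumes "0 < pp s" shows "s \<in> S" using assms pp_out[of s] by (cases "s \<in> S") auto

definition "HH = Max (h ` {s. 0 < pp s})"

lemma R_fin: "finite {s. 0 < pp s}"
  by (rule finite_subset[OF _ finS]) (auto intro: R_S)

lemma h_le: "0 < pp s \<Longrightarrow> h s \<le> HH"
  unfolding HH_def by (rule Max_ge) (use R_fin in auto)

lemma HH_att: "\<exists>s. 0 < pp s \<and> h s = HH"
proof -
  have "HH \<in> h ` {s. 0 < pp s}" unfolding HH_def
    by (rule Max_in) (use R_fin pp00 in auto)
  then obtain s where "s \<in> {s. 0 < pp s}" "HH = h s" by (rule imageE)
  then show ?thesis by (intro exI[of _ s]) simp
qed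

lemma nbr:
  assumes pos: "0 < pp (n1, n2)" and hH: "h (n1, n2) = HH"
  shows "(0 < n1 \<longrightarrow> h (n1 - 1, n2) = HH) \<and> (0 < n2 \<longrightarrow> h (n1, n2 - 1) = HH) \<and>
         (0 < ad1 (n1, n2) \<longrightarrow> h (Suc n1, n2) = HH) \<and> (0 < ad2 (n1, n2) \<longrightarrow> h (n1, Suc n2) = HH)"
proof -
  define T1 where "T1 = real n1 * m1 * (h (n1 - 1, n2) - HH)"
  define T2 where "T2 = real n2 * m2 * (h (n1, n2 - 1) - HH)"
  define T3 where "T3 = l1 * ad1 (n1, n2) * (h (Suc n1, n2) - HH)"
  define T4 where "T4 = l2 * ad2 (n1, n2) * (h (n1, Suc n2) - HH)"
  have sum0: "T1 + T2 + T3 + T4 = 0"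
    using harm[OF R_S[OF pos] pos] hH unfolding T1_def T2_def T3_def T4_def by simp
  have c1: "T1 \<le> 0"
  proof (cases "0 < n1")
    case True
    then have "h (n1 - 1, n2) \<le> HH" using R_down1[OF pos] h_le by blast
    then show ?thesis unfolding T1_def using m1 by (intro mult_nonneg_nonpos) auto
  qed (simp add: T1_def)
  have c2: "T2 \<le> 0"
  proof (cases "0 < n2")
    case True
    then have "h (n1, n2 - 1) \<le> HH" using R_down2[OF pos] h_le by blast
    then show ?thesis unfolding T2_def using m2 by (intro mult_nonneg_nonpos) auto
  qed (simp add: T2_def)
  have c3: "T3 \<le> 0"
  proof (cases "0 < ad1 (n1, n2)")
    case True
    then have "h (Suc n1, n2) \<le> HH" using R_up1[OF pos] h_le by blast
    then show ?thesis unfolding T3_def using l1 ad1_nonneg by (intro mult_nonneg_nonpos) auto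
  next
    case False then have "ad1 (n1, n2) = 0" using ad1_nonneg[of "(n1,n2)"] by simp
    then show ?thesis by (simp add: T3_def)
  qed
  have c4: "T4 \<le> 0"
  proof (cases "0 < ad2 (n1, n2)")
    case True
    then have "h (n1, Suc n2) \<le> HH" using R_up2[OF pos] h_le by blast
    then show ?thesis unfolding T4_def using l2 ad2_nonneg by (intro mult_nonneg_nonpos) auto
  next
    case False then have "ad2 (n1, n2) = 0" using ad2_nonneg[of "(n1,n2)"] by simp
    then show ?thesis by (simp add: T4_def)
  qed
  have z: "T1 = 0" "T2 = 0" "T3 = 0" "T4 = 0" using sum0 c1 c2 c3 c4 by linarith+
  show ?thesis using z m1 m2 l1 l2 unfolding T1_def T2_def T3_def T4_def by auto
qed

lemma down1: "0 < pp (n1, n2) \<Longrightarrow> h (n1, n2) = HH \<Longrightarrow> 0 < pp (0, n2) \<and> h (0, n2) = HH"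
proof (induction n1)
  case 0 then show ?case by simp
next
  case (Suc n)
  have "0 < pp (n, n2)" using R_down1[OF Suc.prems(1)] by simp
  moreover have "h (n, n2) = HH" using nbr[OF Suc.prems] by simp
  ultimately show ?case by (rule Suc.IH)
qed

lemma down2: "0 < pp (0, n2) \<Longrightarrow> h (0, n2) = HH \<Longrightarrow> h (0, 0) = HH"
proof (induction n2)
  case 0 then show ?case by simp
next
  case (Suc n)
  have "0 < pp (0, n)" using R_down2[OF Suc.prems(1)] by simp
  moreover have "h (0, n) = HH" using nbr[OF Suc.prems] by simp
  ultimately show ?case by (rule Suc.IH)
qed

lemma h00: "h (0, 0) = HH"
proof -
  obtain s where s: "0 < pp s" "h s = HH" using HH_att by blast
  obtain n1 n2 where "s = (n1, n2)" by (cases s)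
  then show ?thesis using s down1 down2 by blast
qed

lemma up: "\<forall>n1 n2. n1 + n2 = n \<longrightarrow> 0 < pp (n1, n2) \<longrightarrow> h (n1, n2) = HH"
proof (induction n)
  case 0 then show ?case using h00 by simp
next
  case (Suc n)
  show ?case
  proof (intro allI impI)
    fix n1 n2 assume e: "n1 + n2 = Suc n" and pos: "0 < pp (n1, n2)"
    show "h (n1, n2) = HH"
    proof (cases "0 < n1")
      case True
      have d: "0 < pp (n1 - 1, n2) \<and> 0 < ad1 (n1 - 1, n2)" using R_down1[OF pos True] .
      have "h (n1 - 1, n2) = HH" using Suc.IH[rule_format, of "n1 - 1" n2] e True d by simp
      then have "h (Suc (n1 - 1), n2) = HH" using nbr[of "n1 - 1" n2] d by blast
      then show ?thesis using True by simp
    next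
      case False
      then have True: "0 < n2" using e by simp
      have d: "0 < pp (n1, n2 - 1) \<and> 0 < ad2 (n1, n2 - 1)" using R_down2[OF pos True] .
      have "h (n1, n2 - 1) = HH" using Suc.IH[rule_format, of n1 "n2 - 1"] e True d by simp
      then have "h (n1, Suc (n2 - 1)) = HH" using nbr[of n1 "n2 - 1"] d by blast
      then show ?thesis using True by simp
    qed
  qed
qed

lemma p_HH: "p s = HH * pp s"
proof (cases "0 < pp s")
  case True
  obtain n1 n2 where s: "s = (n1, n2)" by (cases s)
  have "h s = HH" using up[of "n1 + n2"] True s by auto
  then show ?thesis using p_h[of s] by simp
next
  case False
  then have "pp s = 0" using pp_nonneg[of s] by simp
  then show ?thesis using offsupp by simp
qed

lemma stat_unique: "p = pp"
proof -
  have "1 = (\<Sum>s\<in>S. HH * pp s)" using p_sum p_HH by simp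
  also have "\<dots> = HH" by (simp add: sum_distrib_left[symmetric] pp_sum)
  finally have "HH = 1" by simp
  then show ?thesis using p_HH by (simp add: fun_eq_iff)
qed

end

lemma bo_pi_eq: "bo_pi N1 N2 l1 l2 m1 m2 k1 k2 = pp"
  unfolding bo_pi_def by (rule the_equality) (rule pp_stationary, erule stat_unique)

end


definition Wg :: "real \<Rightarrow> real \<Rightarrow> (nat \<Rightarrow> real) \<Rightarrow> (nat \<Rightarrow> real) \<Rightarrow> nat \<Rightarrow> real" where
  "Wg b1 b2 f1 f2 m = (\<Sum>j\<le>m. b1 ^ j / fact j * f1 j * (b2 ^ (m - j) / fact (m - j) * f2 (m - j)))"

lemma pow_fact_Suc: "real (Suc n) * (b ^ Suc n / fact (Suc n)) = b * (b ^ n / fact n)"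
proof -
  have "(fact (Suc n) :: real) = real (Suc n) * fact n" by simp
  moreover have "(0::real) < fact n" by simp
  ultimately show ?thesis by (simp add: field_simps del: of_nat_Suc)
qed

lemma Wg_deficit:
  "(b1 + b2) * Wg b1 b2 f1 f2 m - real (Suc m) * Wg b1 b2 f1 f2 (Suc m) =
     b1 * (\<Sum>i\<le>m. b1 ^ i / fact i * (f1 i - f1 (Suc i)) * (b2 ^ (m - i) / fact (m - i) * f2 (m - i)))
   + b2 * (\<Sum>j\<le>m. b1 ^ j / fact j * f1 j * (b2 ^ (m - j) / fact (m - j) * (f2 (m - j) - f2 (Suc (m - j)))))"
proof -
  define u where "u i = b1 ^ i / fact i" for i
  define v where "v i = b2 ^ i / fact i" for i
  have W: "Wg b1 b2 f1 f2 n = (\<Sum>j\<le>n. u j * f1 j * (v (n - j) * f2 (n - j)))" for n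
    by (simp add: Wg_def u_def v_def)
  have uS: "real (Suc i) * u (Suc i) = b1 * u i" for i unfolding u_def by (rule pow_fact_Suc)
  have vS: "real (Suc i) * v (Suc i) = b2 * v i" for i unfolding v_def by (rule pow_fact_Suc)
  have split: "real (Suc m) * Wg b1 b2 f1 f2 (Suc m) =
      (\<Sum>j\<le>Suc m. real j * (u j * f1 j * (v (Suc m - j) * f2 (Suc m - j))))
    + (\<Sum>j\<le>Suc m. real (Suc m - j) * (u j * f1 j * (v (Suc m - j) * f2 (Suc m - j))))"
  proof -
    have "real (Suc m) * Wg b1 b2 f1 f2 (Suc m) = (\<Sum>j\<le>Suc m. (real j + real (Suc m - j)) * (u j * f1 j * (v (Suc m - j) * f2 (Suc m - j))))"
      unfolding W sum_distrib_left by (intro sum.cong refl) (simp add: of_nat_diff)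
    then show ?thesis by (simp only: distrib_right sum.distrib)
  qed
  have s1: "(\<Sum>j\<le>Suc m. real j * (u j * f1 j * (v (Suc m - j) * f2 (Suc m - j))))
      = b1 * (\<Sum>i\<le>m. u i * f1 (Suc i) * (v (m - i) * f2 (m - i)))"
    unfolding sum.atMost_Suc_shift sum_distrib_left
  proof (simp del: of_nat_Suc, intro sum.cong refl)
    fix i assume "i \<in> {..m}"
    show "real (Suc i) * (u (Suc i) * f1 (Suc i) * (v (m - i) * f2 (m - i))) = b1 * (u i * f1 (Suc i) * (v (m - i) * f2 (m - i)))"
      using uS[of i] by (simp add: algebra_simps del: of_nat_Suc)
  qed
  have s2: "(\<Sum>j\<le>Suc m. real (Suc m - j) * (u j * f1 j * (v (Suc m - j) * f2 (Suc m - j))))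
      = b2 * (\<Sum>j\<le>m. u j * f1 j * (v (m - j) * f2 (Suc (m - j))))"
  proof -
    define F where "F j = real (Suc m - j) * (u j * f1 j * (v (Suc m - j) * f2 (Suc m - j)))" for j
    have "(\<Sum>j\<le>Suc m. F j) = (\<Sum>j\<le>m. F j) + F (Suc m)" by (rule sum.atMost_Suc)
    also have "F (Suc m) = 0" by (simp add: F_def)
    also have "(\<Sum>j\<le>m. F j) = (\<Sum>j\<le>m. b2 * (u j * f1 j * (v (m - j) * f2 (Suc (m - j)))))"
    proof (rule sum.cong[OF refl])
      fix j assume "j \<in> {..m}"
      then have j: "Suc m - j = Suc (m - j)" by auto
      show "F j = b2 * (u j * f1 j * (v (m - j) * f2 (Suc (m - j))))"
        unfolding F_def j using vS[of "m - j"] by (simp add: algebra_simps del: of_nat_Suc)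
    qed
    finally show ?thesis by (simp add: F_def sum_distrib_left)
  qed
  show ?thesis
    unfolding split s1 s2 W[of m] sum_distrib_left[symmetric] u_def[symmetric] v_def[symmetric]
    by (simp add: algebra_simps sum_subtractf sum.distrib sum_distrib_left)
qed


lemma sum_neg_lemma:
  fixes t :: "'a \<Rightarrow> real"
  assumes "finite A" "b \<in> A" "\<And>a. a \<in> A \<Longrightarrow> t a \<le> 0" "t b < 0"
  shows "sum t A < 0"
proof -
  have "sum t A = t b + sum t (A - {b})" using assms(1,2) by (rule sum.remove)
  moreover have "sum t (A - {b}) \<le> 0" using assms(3) by (intro sum_nonpos) auto
  ultimately show ?thesis using assms(4) by simp
qed

lemma cheb:
  fixes G W :: "nat \<Rightarrow> real" and n :: nat and a :: real
  assumes Gpos: "\<And>m. m \<le> n \<Longrightarrow> 0 < G m"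
      and Wnn: "\<And>m. 0 \<le> W m"
      and Grec: "\<And>m. m < n \<Longrightarrow> real (Suc m) * G (Suc m) = a * G m"
      and Wrec: "\<And>m. m < n \<Longrightarrow> real (Suc m) * W (Suc m) \<le> a * W m"
      and Wstr: "real n * W n < a * W (n - 1)" and n: "0 < n"
  shows "(\<Sum>m\<le>n. real m * W m) * (\<Sum>m\<le>n. G m) < (\<Sum>m\<le>n. real m * G m) * (\<Sum>m\<le>n. W m)"
proof -
  define r where "r m = W m / G m" for m
  have Wr: "W m = G m * r m" if "m \<le> n" for m using Gpos[OF that] by (simp add: r_def)
  have step: "r (Suc m) \<le> r m" if m: "m < n" for m
  proof -
    have g1: "0 < G m" "0 < G (Suc m)" using m Gpos by auto
    have "real (Suc m) * W (Suc m) * G m \<le> a * W m * G m"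
      using Wrec[OF m] g1 by (intro mult_right_mono) auto
    also have "\<dots> = W m * (real (Suc m) * G (Suc m))" using Grec[OF m] by (simp add: algebra_simps)
    finally have "real (Suc m) * (W (Suc m) * G m) \<le> real (Suc m) * (W m * G (Suc m))"
      by (simp add: algebra_simps)
    then have "W (Suc m) * G m \<le> W m * G (Suc m)"
      by (rule mult_left_le_imp_le) simp
    then show ?thesis using g1 unfolding r_def by (simp add: divide_simps)
  qed
  have nS: "n = Suc (n - 1)" using n by simp
  have strict: "r n < r (n - 1)"
  proof -
    define m where "m = n - 1"
    have m: "m < n" "n = Suc m" using n by (auto simp: m_def)
    have g1: "0 < G m" "0 < G (Suc m)" using m Gpos by auto
    have ws: "real (Suc m) * W (Suc m) < a * W m" using Wstr unfolding m(2) by simp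
    have "real (Suc m) * W (Suc m) * G m < a * W m * G m"
      using ws g1 by (intro mult_strict_right_mono) auto
    also have "\<dots> = W m * (real (Suc m) * G (Suc m))" using Grec[OF m(1)] by (simp add: algebra_simps)
    finally have "real (Suc m) * (W (Suc m) * G m) < real (Suc m) * (W m * G (Suc m))"
      by (simp add: algebra_simps)
    then have "W (Suc m) * G m < W m * G (Suc m)"
      by (rule mult_left_less_imp_less) simp
    then have "r (Suc m) < r m" using g1 unfolding r_def by (simp add: divide_simps)
    then show ?thesis unfolding m(2) by simp
  qed
  have mono: "r j \<le> r i" if "i \<le> j" "j \<le> n" for i j
    using that
  proof (induction j)
    case 0 then show ?case by simp
  next
    case (Suc j)
    show ?case
    proof (cases "i = Suc j")
      case False
      then have "i \<le> j" using Suc.prems by simp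
      then have "r j \<le> r i" using Suc.IH Suc.prems by simp
      moreover have "r (Suc j) \<le> r j" using step Suc.prems by simp
      ultimately show ?thesis by simp
    qed simp
  qed
  define t where "t i j = G i * G j * ((real i - real j) * (r i - r j))" for i j
  have tnp: "t i j \<le> 0" if "i \<le> n" "j \<le> n" for i j
  proof -
    have "(real i - real j) * (r i - r j) \<le> 0"
    proof (cases "i \<le> j")
      case True
      then have "r j \<le> r i" using mono that by simp
      then show ?thesis using True by (intro mult_nonpos_nonneg) auto
    next
      case False
      then have "r i \<le> r j" using mono that by simp
      then show ?thesis using False by (intro mult_nonneg_nonpos) auto
    qed
    moreover have "0 \<le> G i * G j" using Gpos that by (simp add: less_imp_le)
    ultimately show ?thesis unfolding t_def by (simp add: mult_nonneg_nonpos)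
  qed
  have tneg: "t n (n - 1) < 0"
  proof -
    have "(real n - real (n - 1)) * (r n - r (n - 1)) < 0" using strict n by (simp add: of_nat_diff mult_pos_neg)
    moreover have "0 < G n * G (n - 1)" using Gpos by simp
    ultimately show ?thesis unfolding t_def by (simp add: mult_pos_neg)
  qed
  have neg: "(\<Sum>i\<le>n. \<Sum>j\<le>n. t i j) < 0"
  proof (rule sum_neg_lemma[of _ n])
    show "(\<Sum>j\<le>n. t n j) < 0" by (rule sum_neg_lemma[of _ "n - 1"]) (use tnp tneg in auto)
    show "\<And>i. i \<in> {..n} \<Longrightarrow> (\<Sum>j\<le>n. t i j) \<le> 0" using tnp by (auto intro: sum_nonpos)
  qed auto
  have tform: "t i j = real i * W i * G j - real i * G i * W j - W i * (real j * G j) + G i * (real j * W j)"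
    if "i \<le> n" "j \<le> n" for i j
    unfolding t_def Wr[OF that(1)] Wr[OF that(2)] by (simp add: algebra_simps)
  have "(\<Sum>i\<le>n. \<Sum>j\<le>n. t i j) =
     (\<Sum>i\<le>n. \<Sum>j\<le>n. real i * W i * G j) - (\<Sum>i\<le>n. \<Sum>j\<le>n. real i * G i * W j)
     - (\<Sum>i\<le>n. \<Sum>j\<le>n. W i * (real j * G j)) + (\<Sum>i\<le>n. \<Sum>j\<le>n. G i * (real j * W j))"
  proof -
    have "(\<Sum>i\<le>n. \<Sum>j\<le>n. t i j) = (\<Sum>i\<le>n. \<Sum>j\<le>n. real i * W i * G j - real i * G i * W j - W i * (real j * G j) + G i * (real j * W j))"
      by (intro sum.cong refl) (simp add: tform)
    then show ?thesis by (simp only: sum.distrib sum_subtractf)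
  qed
  also have "\<dots> = 2 * ((\<Sum>m\<le>n. real m * W m) * (\<Sum>m\<le>n. G m) - (\<Sum>m\<le>n. real m * G m) * (\<Sum>m\<le>n. W m))"
  proof -
    have e1: "(\<Sum>i\<le>n. \<Sum>j\<le>n. real i * W i * G j) = (\<Sum>m\<le>n. real m * W m) * (\<Sum>m\<le>n. G m)"
      unfolding sum_product ..
    have e2: "(\<Sum>i\<le>n. \<Sum>j\<le>n. real i * G i * W j) = (\<Sum>m\<le>n. real m * G m) * (\<Sum>m\<le>n. W m)"
      unfolding sum_product ..
    have e3: "(\<Sum>i\<le>n. \<Sum>j\<le>n. W i * (real j * G j)) = (\<Sum>m\<le>n. W m) * (\<Sum>m\<le>n. real m * G m)"
      unfolding sum_product ..
    have e4: "(\<Sum>i\<le>n. \<Sum>j\<le>n. G i * (real j * W j)) = (\<Sum>m\<le>n. G m) * (\<Sum>m\<le>n. real m * W m)"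
      unfolding sum_product ..
    show ?thesis unfolding e1 e2 e3 e4 by (simp add: algebra_simps)
  qed
  finally show ?thesis using neg by simp
qed



context bo begin

lemma B1_eq:
  assumes "k1 = fst x * real N1" "k2 = snd x * real N2"
  shows "B1 N1 N2 l1 l2 m1 m2 x = 1 - (\<Sum>s\<in>S. pp s * ad1 s)"
proof -
  have "B1 N1 N2 l1 l2 m1 m2 x = (\<Sum>s\<in>S. pp s * (1 - ad1 s))"
    unfolding B1_def Let_def assms[symmetric] bo_pi_eq ad1_def by simp
  also have "\<dots> = (\<Sum>s\<in>S. pp s) - (\<Sum>s\<in>S. pp s * ad1 s)"
    by (simp add: algebra_simps sum_subtractf)
  finally show ?thesis by (simp add: pp_sum)
qed

lemma B2_eq:
  assumes "k1 = fst x * real N1" "k2 = snd x * real N2"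
  shows "B2 N1 N2 l1 l2 m1 m2 x = 1 - (\<Sum>s\<in>S. pp s * ad2 s)"
proof -
  have "B2 N1 N2 l1 l2 m1 m2 x = (\<Sum>s\<in>S. pp s * (1 - ad2 s))"
    unfolding B2_def Let_def assms[symmetric] bo_pi_eq ad2_def by simp
  also have "\<dots> = (\<Sum>s\<in>S. pp s) - (\<Sum>s\<in>S. pp s * ad2 s)"
    by (simp add: algebra_simps sum_subtractf)
  finally show ?thesis by (simp add: pp_sum)
qed

lemma shift_sum1:
  assumes g0: "\<And>t. fst t = 0 \<Longrightarrow> g t = 0" and gout: "\<And>t. t \<notin> S \<Longrightarrow> g t = 0"
  shows "(\<Sum>s\<in>S. g (Suc (fst s), snd s)) = (\<Sum>t\<in>S. g t)"
proof -
  define f where "f s = (Suc (fst s), snd s)" for s :: "nat \<times> nat"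
  have inj: "inj_on f S" by (auto simp: f_def inj_on_def prod_eq_iff)
  have fin: "finite (f ` S \<union> S)" using finS by simp
  have "(\<Sum>s\<in>S. g (Suc (fst s), snd s)) = (\<Sum>t\<in>f ` S. g t)"
    using sum.reindex[OF inj, of g] by (simp add: f_def comp_def)
  also have "\<dots> = (\<Sum>t\<in>f ` S \<union> S. g t)"
  proof (rule sum.mono_neutral_left[OF fin])
    show "\<forall>t\<in>f ` S \<union> S - f ` S. g t = 0"
    proof
      fix t assume t: "t \<in> f ` S \<union> S - f ` S"
      show "g t = 0"
      proof (cases "fst t = 0")
        case False
        then have "t = f (fst t - 1, snd t)" by (simp add: f_def)
        moreover have "(fst t - 1, snd t) \<in> S" using t by (auto simp: bo_states_def)
        ultimately show ?thesis using t by blast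
      qed (rule g0)
    qed
  qed auto
  also have "\<dots> = (\<Sum>t\<in>S. g t)"
    by (rule sum.mono_neutral_right[OF fin]) (auto intro: gout)
  finally show ?thesis .
qed

lemma shift_sum2:
  assumes g0: "\<And>t. snd t = 0 \<Longrightarrow> g t = 0" and gout: "\<And>t. t \<notin> S \<Longrightarrow> g t = 0"
  shows "(\<Sum>s\<in>S. g (fst s, Suc (snd s))) = (\<Sum>t\<in>S. g t)"
proof -
  define f where "f s = (fst s, Suc (snd s))" for s :: "nat \<times> nat"
  have inj: "inj_on f S" by (auto simp: f_def inj_on_def prod_eq_iff)
  have fin: "finite (f ` S \<union> S)" using finS by simp
  have "(\<Sum>s\<in>S. g (fst s, Suc (snd s))) = (\<Sum>t\<in>f ` S. g t)"
    using sum.reindex[OF inj, of g] by (simp add: f_def comp_def)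
  also have "\<dots> = (\<Sum>t\<in>f ` S \<union> S. g t)"
  proof (rule sum.mono_neutral_left[OF fin])
    show "\<forall>t\<in>f ` S \<union> S - f ` S. g t = 0"
    proof
      fix t assume t: "t \<in> f ` S \<union> S - f ` S"
      show "g t = 0"
      proof (cases "snd t = 0")
        case False
        then have "t = f (fst t, snd t - 1)" by (simp add: f_def)
        moreover have "(fst t, snd t - 1) \<in> S" using t by (auto simp: bo_states_def)
        ultimately show ?thesis using t by blast
      qed (rule g0)
    qed
  qed auto
  also have "\<dots> = (\<Sum>t\<in>S. g t)"
    by (rule sum.mono_neutral_right[OF fin]) (auto intro: gout)
  finally show ?thesis .
qed

lemma thr1: "l1 * (\<Sum>s\<in>S. pp s * ad1 s) = m1 * (\<Sum>s\<in>S. real (fst s) * pp s)"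
proof -
  have "l1 * (\<Sum>s\<in>S. pp s * ad1 s) = (\<Sum>s\<in>S. pp (Suc (fst s), snd s) * (real (Suc (fst s)) * m1))"
    unfolding sum_distrib_left
  proof (rule sum.cong[OF refl])
    fix s :: "nat \<times> nat"
    obtain a b where s: "s = (a, b)" by (cases s)
    show "l1 * (pp s * ad1 s) = pp (Suc (fst s), snd s) * (real (Suc (fst s)) * m1)"
      unfolding s using DB1[of a b] by (simp add: algebra_simps)
  qed
  also have "\<dots> = (\<Sum>t\<in>S. pp t * (real (fst t) * m1))"
  proof -
    have "(\<Sum>s\<in>S. (\<lambda>t. pp t * (real (fst t) * m1)) (Suc (fst s), snd s)) = (\<Sum>t\<in>S. (\<lambda>t. pp t * (real (fst t) * m1)) t)"
      by (rule shift_sum1) (auto simp: pp_out)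
    then show ?thesis by simp
  qed
  also have "\<dots> = m1 * (\<Sum>s\<in>S. real (fst s) * pp s)"
    by (simp add: sum_distrib_left algebra_simps)
  finally show ?thesis .
qed

lemma thr2: "l2 * (\<Sum>s\<in>S. pp s * ad2 s) = m2 * (\<Sum>s\<in>S. real (snd s) * pp s)"
proof -
  have "l2 * (\<Sum>s\<in>S. pp s * ad2 s) = (\<Sum>s\<in>S. pp (fst s, Suc (snd s)) * (real (Suc (snd s)) * m2))"
    unfolding sum_distrib_left
  proof (rule sum.cong[OF refl])
    fix s :: "nat \<times> nat"
    obtain a b where s: "s = (a, b)" by (cases s)
    show "l2 * (pp s * ad2 s) = pp (fst s, Suc (snd s)) * (real (Suc (snd s)) * m2)"
      unfolding s using DB2[of a b] by (simp add: algebra_simps)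
  qed
  also have "\<dots> = (\<Sum>t\<in>S. pp t * (real (snd t) * m2))"
  proof -
    have "(\<Sum>s\<in>S. (\<lambda>t. pp t * (real (snd t) * m2)) (fst s, Suc (snd s))) = (\<Sum>t\<in>S. (\<lambda>t. pp t * (real (snd t) * m2)) t)"
      by (rule shift_sum2) (auto simp: pp_out)
    then show ?thesis by simp
  qed
  also have "\<dots> = m2 * (\<Sum>s\<in>S. real (snd s) * pp s)"
    by (simp add: sum_distrib_left algebra_simps)
  finally show ?thesis .
qed

lemma sumS: "(\<Sum>s\<in>S. f s) = (\<Sum>m\<le>N1+N2. \<Sum>j\<le>m. f (j, m - j))"
proof -
  have "(\<Sum>s\<in>S. f s) = (\<Sum>(i,j)\<in>{(i,j). i + j \<le> N1 + N2}. f (i, j))"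
    by (simp add: bo_states_def)
  also have "\<dots> = (\<Sum>m\<le>N1+N2. \<Sum>j\<le>m. f (j, m - j))"
    by (rule sum.triangle_reindex_eq)
  finally show ?thesis .
qed

definition "W m = Wg a1 a2 ph1 ph2 m"

lemma W_w: "m \<le> N1 + N2 \<Longrightarrow> (\<Sum>j\<le>m. w (j, m - j)) = W m"
  unfolding W_def Wg_def by (intro sum.cong refl) (auto simp: w_def bo_states_def F1_def F2_def)

lemma Z_W: "Z = (\<Sum>m\<le>N1+N2. W m)"
  unfolding Z_def sumS by (intro sum.cong refl) (simp add: W_w)

definition "EM = (\<Sum>s\<in>S. real (fst s + snd s) * pp s)"

lemma EM_W: "EM = (\<Sum>m\<le>N1+N2. real m * W m) / (\<Sum>m\<le>N1+N2. W m)"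
proof -
  have "EM * Z = (\<Sum>s\<in>S. real (fst s + snd s) * w s)"
    unfolding EM_def pp_def sum_distrib_right using Z_pos by (intro sum.cong refl) simp
  also have "\<dots> = (\<Sum>m\<le>N1+N2. real m * W m)"
    unfolding sumS
  proof (intro sum.cong refl)
    fix m assume "m \<in> {..N1+N2}"
    then have "(\<Sum>j\<le>m. real (j + (m - j)) * w (j, m - j)) = real m * (\<Sum>j\<le>m. w (j, m - j))"
      unfolding sum_distrib_left by (intro sum.cong refl) auto
    then show "(\<Sum>j\<le>m. real (fst (j, m - j) + snd (j, m - j)) * w (j, m - j)) = real m * W m"
      using W_w \<open>m \<in> {..N1+N2}\<close> by simp
  qed
  finally show ?thesis using Z_pos unfolding Z_W by (simp add: field_simps)
qed

lemma util_EM: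
  assumes "k1 = fst x * real N1" "k2 = snd x * real N2" "m1 = m2"
  shows "util_obj N1 N2 l1 l2 m1 m2 x = 1 - m1 * EM / (l1 + l2)"
proof -
  have "util_obj N1 N2 l1 l2 m1 m2 x = (l1 * (1 - (\<Sum>s\<in>S. pp s * ad1 s)) + l2 * (1 - (\<Sum>s\<in>S. pp s * ad2 s))) / (l1 + l2)"
    unfolding util_obj_def B1_eq[OF assms(1,2)] B2_eq[OF assms(1,2)] by (simp add: add_divide_distrib)
  also have "\<dots> = ((l1 + l2) - (m1 * (\<Sum>s\<in>S. real (fst s) * pp s) + m2 * (\<Sum>s\<in>S. real (snd s) * pp s))) / (l1 + l2)"
    using thr1 thr2 by (simp add: algebra_simps)
  also have "m1 * (\<Sum>s\<in>S. real (fst s) * pp s) + m2 * (\<Sum>s\<in>S. real (snd s) * pp s) = m1 * EM"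
    unfolding EM_def by (simp add: assms(3)[symmetric] algebra_simps sum.distrib)
  finally show ?thesis using l1 l2 by (simp add: diff_divide_distrib)
qed


lemma ph1_Suc: "ph1 (Suc i) = ph1 i * al N1 k2 i" by (simp add: ph1_def)
lemma ph2_Suc: "ph2 (Suc i) = ph2 i * al N2 k1 i" by (simp add: ph2_def)
lemma ph1_anti: "ph1 (Suc i) \<le> ph1 i"
  unfolding ph1_Suc using ph1_nonneg[of i] al_le1[of N1 k2 i] by (simp add: mult_left_le)
lemma ph2_anti: "ph2 (Suc i) \<le> ph2 i"
  unfolding ph2_Suc using ph2_nonneg[of i] al_le1[of N2 k1 i] by (simp add: mult_left_le)
lemma ph1_one: "i \<le> N1 + nat \<lfloor>k2\<rfloor> \<Longrightarrow> ph1 i = 1"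
  unfolding ph1_def by (intro prod.neutral) (auto simp: al_def)
lemma ph2_one: "i \<le> N2 + nat \<lfloor>k1\<rfloor> \<Longrightarrow> ph2 i = 1"
  unfolding ph2_def by (intro prod.neutral) (auto simp: al_def)
lemma ph1_drop: "ph1 (Suc (N1 + nat \<lfloor>k2\<rfloor>)) = frac k2"
  unfolding ph1_Suc using ph1_one[of "N1 + nat \<lfloor>k2\<rfloor>"] by (simp add: al_def)
lemma ph2_drop: "ph2 (Suc (N2 + nat \<lfloor>k1\<rfloor>)) = frac k1"
  unfolding ph2_Suc using ph2_one[of "N2 + nat \<lfloor>k1\<rfloor>"] by (simp add: al_def)

lemma W_deficit: "(a1 + a2) * W m - real (Suc m) * W (Suc m) =
     a1 * (\<Sum>i\<le>m. a1 ^ i / fact i * (ph1 i - ph1 (Suc i)) * (a2 ^ (m - i) / fact (m - i) * ph2 (m - i)))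
   + a2 * (\<Sum>j\<le>m. a1 ^ j / fact j * ph1 j * (a2 ^ (m - j) / fact (m - j) * (ph2 (m - j) - ph2 (Suc (m - j)))))"
  unfolding W_def by (rule Wg_deficit)

lemma sum1_nonneg: "0 \<le> (\<Sum>i\<le>m. a1 ^ i / fact i * (ph1 i - ph1 (Suc i)) * (a2 ^ (m - i) / fact (m - i) * ph2 (m - i)))"
  using a1_pos a2_pos ph1_anti ph2_nonneg by (intro sum_nonneg mult_nonneg_nonneg) auto
lemma sum2_nonneg: "0 \<le> (\<Sum>j\<le>m. a1 ^ j / fact j * ph1 j * (a2 ^ (m - j) / fact (m - j) * (ph2 (m - j) - ph2 (Suc (m - j)))))"
  using a1_pos a2_pos ph2_anti ph1_nonneg by (intro sum_nonneg mult_nonneg_nonneg) auto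

lemma W_nonneg: "0 \<le> W m"
  unfolding W_def Wg_def using a1_pos a2_pos ph1_nonneg ph2_nonneg
  by (intro sum_nonneg mult_nonneg_nonneg) auto

lemma W_rec_le: "real (Suc m) * W (Suc m) \<le> (a1 + a2) * W m"
  using W_deficit[of m] sum1_nonneg[of m] sum2_nonneg[of m] a1_pos a2_pos
  by (smt (verit) mult_nonneg_nonneg)

lemma W_rec_eq:
  assumes "\<And>i. i \<le> Suc m \<Longrightarrow> ph1 i = 1" "\<And>i. i \<le> Suc m \<Longrightarrow> ph2 i = 1"
  shows "real (Suc m) * W (Suc m) = (a1 + a2) * W m"
proof -
  have "(\<Sum>i\<le>m. a1 ^ i / fact i * (ph1 i - ph1 (Suc i)) * (a2 ^ (m - i) / fact (m - i) * ph2 (m - i))) = 0"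
    by (intro sum.neutral ballI) (simp add: assms)
  moreover have "(\<Sum>j\<le>m. a1 ^ j / fact j * ph1 j * (a2 ^ (m - j) / fact (m - j) * (ph2 (m - j) - ph2 (Suc (m - j))))) = 0"
    by (intro sum.neutral ballI) (simp add: assms)
  ultimately show ?thesis using W_deficit[of m] by simp
qed

lemma W_pos:
  assumes "ph2 m = 1"
  shows "0 < W m"
proof -
  have t: "0 < a1 ^ 0 / fact 0 * ph1 0 * (a2 ^ (m - 0) / fact (m - 0) * ph2 (m - 0))"
    using assms a2_pos by (simp add: ph1_def)
  have "a1 ^ 0 / fact 0 * ph1 0 * (a2 ^ (m - 0) / fact (m - 0) * ph2 (m - 0)) \<le> W m"
    unfolding W_def Wg_def
    by (rule member_le_sum[of 0 "{..m}" "\<lambda>j. a1 ^ j / fact j * ph1 j * (a2 ^ (m - j) / fact (m - j) * ph2 (m - j))"])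
       (use a1_pos a2_pos ph1_nonneg ph2_nonneg in \<open>auto intro!: mult_nonneg_nonneg\<close>)
  then show ?thesis using t by linarith
qed

lemma W_strict1:
  assumes c: "nat \<lfloor>k2\<rfloor> < N2"
  shows "real (N1 + N2) * W (N1 + N2) < (a1 + a2) * W (N1 + N2 - 1)"
proof -
  define m where "m = N1 + N2 - 1"
  define cc where "cc = N1 + nat \<lfloor>k2\<rfloor>"
  have mS: "Suc m = N1 + N2" using c by (simp add: m_def)
  have ccm: "cc \<le> m" using c by (simp add: m_def cc_def)
  have p2: "ph2 (m - cc) = 1" by (rule ph2_one) (use c in \<open>simp add: m_def cc_def\<close>)
  have d: "ph1 cc - ph1 (Suc cc) > 0"
    using ph1_one[of cc] ph1_drop frac_lt_1[of k2] by (simp add: cc_def)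
  have tpos: "0 < a1 ^ cc / fact cc * (ph1 cc - ph1 (Suc cc)) * (a2 ^ (m - cc) / fact (m - cc) * ph2 (m - cc))"
    using a1_pos a2_pos d p2 by simp
  have "a1 ^ cc / fact cc * (ph1 cc - ph1 (Suc cc)) * (a2 ^ (m - cc) / fact (m - cc) * ph2 (m - cc))
      \<le> (\<Sum>i\<le>m. a1 ^ i / fact i * (ph1 i - ph1 (Suc i)) * (a2 ^ (m - i) / fact (m - i) * ph2 (m - i)))"
    by (rule member_le_sum[of cc "{..m}" "\<lambda>i. a1 ^ i / fact i * (ph1 i - ph1 (Suc i)) * (a2 ^ (m - i) / fact (m - i) * ph2 (m - i))"])
       (use ccm a1_pos a2_pos ph1_anti ph2_nonneg in \<open>auto intro!: mult_nonneg_nonneg\<close>)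
  then have "0 < (a1 + a2) * W m - real (Suc m) * W (Suc m)"
    using W_deficit[of m] sum2_nonneg[of m] tpos a1_pos a2_pos
    by (smt (verit) mult_pos_pos mult_nonneg_nonneg)
  then show ?thesis unfolding mS[symmetric] by (simp add: m_def)
qed

lemma W_strict2:
  assumes c: "nat \<lfloor>k1\<rfloor> < N1"
  shows "real (N1 + N2) * W (N1 + N2) < (a1 + a2) * W (N1 + N2 - 1)"
proof -
  define m where "m = N1 + N2 - 1"
  define cc where "cc = N2 + nat \<lfloor>k1\<rfloor>"
  define j where "j = m - cc"
  have mS: "Suc m = N1 + N2" using c by (simp add: m_def)
  have ccm: "cc \<le> m" using c by (simp add: m_def cc_def)
  have mj: "m - j = cc" using ccm by (simp add: j_def)
  have jm: "j \<le> m" by (simp add: j_def)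
  have p1: "ph1 j = 1" by (rule ph1_one) (use c in \<open>simp add: j_def m_def cc_def\<close>)
  have d: "ph2 cc - ph2 (Suc cc) > 0"
    using ph2_one[of cc] ph2_drop frac_lt_1[of k1] by (simp add: cc_def)
  have tpos: "0 < a1 ^ j / fact j * ph1 j * (a2 ^ (m - j) / fact (m - j) * (ph2 (m - j) - ph2 (Suc (m - j))))"
    using a1_pos a2_pos d p1 mj by simp
  have "a1 ^ j / fact j * ph1 j * (a2 ^ (m - j) / fact (m - j) * (ph2 (m - j) - ph2 (Suc (m - j))))
      \<le> (\<Sum>j\<le>m. a1 ^ j / fact j * ph1 j * (a2 ^ (m - j) / fact (m - j) * (ph2 (m - j) - ph2 (Suc (m - j)))))"
    by (rule member_le_sum[of j "{..m}" "\<lambda>j. a1 ^ j / fact j * ph1 j * (a2 ^ (m - j) / fact (m - j) * (ph2 (m - j) - ph2 (Suc (m - j))))"])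
       (use jm a1_pos a2_pos ph2_anti ph1_nonneg in \<open>auto intro!: mult_nonneg_nonneg\<close>)
  then have "0 < (a1 + a2) * W m - real (Suc m) * W (Suc m)"
    using W_deficit[of m] sum1_nonneg[of m] tpos a1_pos a2_pos
    by (smt (verit) mult_pos_pos mult_nonneg_nonneg)
  then show ?thesis unfolding mS[symmetric] by (simp add: m_def)
qed


lemma ad_eq_11:
  assumes "k1 = real N1" "k2 = real N2" "s \<in> S"
  shows "ad1 s = ad2 s"
  unfolding ad1_def ad2_def adm_al al_def using assms by (auto simp: bo_states_def)

lemma ph1_full: "k2 = real N2 \<Longrightarrow> i \<le> N1 + N2 \<Longrightarrow> ph1 i = 1"
  by (rule ph1_one) simp
lemma ph2_full: "k1 = real N1 \<Longrightarrow> i \<le> N1 + N2 \<Longrightarrow> ph2 i = 1"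
  by (rule ph2_one) simp

lemma ph1_zero_box: assumes "k2 = 0" shows "ph1 i = (if i \<le> N1 then 1 else 0)"
proof (induction i)
  case 0 then show ?case by (simp add: ph1_def)
next
  case (Suc i)
  show ?case
  proof (cases "Suc i \<le> N1")
    case True then show ?thesis using ph1_one[of "Suc i"] assms by simp
  next
    case False
    then have "i = N1 \<or> N1 < i" by auto
    then show ?thesis
    proof
      assume "i = N1" then show ?thesis using ph1_drop assms by simp
    next
      assume "N1 < i" then show ?thesis using Suc.IH by (simp add: ph1_Suc)
    qed
  qed
qed

lemma ph2_zero_box: assumes "k1 = 0" shows "ph2 i = (if i \<le> N2 then 1 else 0)"
proof (induction i)
  case 0 then show ?case by (simp add: ph2_def)
next
  case (Suc i)
  show ?case
  proof (cases "Suc i \<le> N2")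
    case True then show ?thesis using ph2_one[of "Suc i"] assms by simp
  next
    case False
    then have "i = N2 \<or> N2 < i" by auto
    then show ?thesis
    proof
      assume "i = N2" then show ?thesis using ph2_drop assms by simp
    next
      assume "N2 < i" then show ?thesis using Suc.IH by (simp add: ph2_Suc)
    qed
  qed
qed

lemma box_sum:
  assumes "k1 = 0" "k2 = 0"
    and fz: "\<And>s. s \<in> S \<Longrightarrow> \<not> (fst s \<le> N1 \<and> snd s \<le> N2) \<Longrightarrow> w s * f s = 0"
  shows "(\<Sum>s\<in>S. w s * f s) = (\<Sum>n1\<le>N1. \<Sum>n2\<le>N2. a1 ^ n1 / fact n1 * (a2 ^ n2 / fact n2) * f (n1, n2))"
proof -
  have sub: "{..N1} \<times> {..N2} \<subseteq> S" by (auto simp: bo_states_def)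
  have "(\<Sum>s\<in>S. w s * f s) = (\<Sum>s\<in>{..N1} \<times> {..N2}. w s * f s)"
  proof (rule sum.mono_neutral_right[OF finS sub])
    show "\<forall>s\<in>S - {..N1} \<times> {..N2}. w s * f s = 0"
    proof
      fix s assume s: "s \<in> S - {..N1} \<times> {..N2}"
      have "\<not> (fst s \<le> N1 \<and> snd s \<le> N2)" using s by (auto simp: mem_Times_iff)
      then show "w s * f s = 0" using fz s by blast
    qed
  qed
  also have "\<dots> = (\<Sum>n1\<le>N1. \<Sum>n2\<le>N2. w (n1, n2) * f (n1, n2))"
    by (simp add: sum.cartesian_product)
  also have "\<dots> = (\<Sum>n1\<le>N1. \<Sum>n2\<le>N2. a1 ^ n1 / fact n1 * (a2 ^ n2 / fact n2) * f (n1, n2))"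
    by (intro sum.cong refl)
       (auto simp: w_def F1_def F2_def ph1_zero_box[OF assms(2)] ph2_zero_box[OF assms(1)] bo_states_def)
  finally show ?thesis .
qed

lemma w_out_box: assumes "k1 = 0" "k2 = 0" "\<not> (fst s \<le> N1 \<and> snd s \<le> N2)" shows "w s = 0"
  using ph1_zero_box[OF assms(2), of "fst s"] ph2_zero_box[OF assms(1), of "snd s"] assms(3)
  unfolding w_def F1_def F2_def by auto

lemma Z_00: assumes "k1 = 0" "k2 = 0"
  shows "Z = (\<Sum>n1\<le>N1. a1 ^ n1 / fact n1) * (\<Sum>n2\<le>N2. a2 ^ n2 / fact n2)"
proof -
  have "Z = (\<Sum>s\<in>S. w s * 1)" by (simp add: Z_def)
  also have "\<dots> = (\<Sum>n1\<le>N1. \<Sum>n2\<le>N2. a1 ^ n1 / fact n1 * (a2 ^ n2 / fact n2) * 1)"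
    by (rule box_sum[OF assms]) (use w_out_box[OF assms] in auto)
  also have "\<dots> = (\<Sum>n1\<le>N1. a1 ^ n1 / fact n1) * (\<Sum>n2\<le>N2. a2 ^ n2 / fact n2)"
    by (simp add: sum_product)
  finally show ?thesis .
qed

lemma B1_00: assumes "k1 = 0" "k2 = 0"
  shows "(\<Sum>s\<in>S. pp s * (1 - ad1 s)) = erlangB N1 a1"
proof -
  have "(\<Sum>s\<in>S. w s * (1 - ad1 s)) = (\<Sum>n1\<le>N1. \<Sum>n2\<le>N2. a1 ^ n1 / fact n1 * (a2 ^ n2 / fact n2) * (1 - ad1 (n1, n2)))"
    by (rule box_sum[OF assms]) (use w_out_box[OF assms] in auto)
  also have "\<dots> = (\<Sum>n1\<le>N1. \<Sum>n2\<le>N2. (if n1 = N1 then a1 ^ n1 / fact n1 * (a2 ^ n2 / fact n2) else 0))"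
  proof (intro sum.cong refl)
    fix n1 n2 assume "n1 \<in> {..N1}" "n2 \<in> {..N2}"
    then have le: "n1 \<le> N1" "n2 \<le> N2" by auto
    have "1 - ad1 (n1, n2) = (if n1 = N1 then 1 else 0)"
    proof (cases "n1 = N1")
      case True then show ?thesis unfolding ad1_def adm_al al_def using assms by simp
    next
      case False
      then have "n1 < N1" "n1 + n2 < N1 + N2" using le by auto
      then show ?thesis using False unfolding ad1_def adm_al al_def using assms by simp
    qed
    then show "a1 ^ n1 / fact n1 * (a2 ^ n2 / fact n2) * (1 - ad1 (n1, n2)) = (if n1 = N1 then a1 ^ n1 / fact n1 * (a2 ^ n2 / fact n2) else 0)"
      by simp
  qed
  also have "\<dots> = (\<Sum>n1\<le>N1. if n1 = N1 then (\<Sum>n2\<le>N2. a1 ^ n1 / fact n1 * (a2 ^ n2 / fact n2)) else 0)"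
    by (intro sum.cong refl) simp
  also have "\<dots> = (\<Sum>n2\<le>N2. a1 ^ N1 / fact N1 * (a2 ^ n2 / fact n2))"
    by simp
  also have "\<dots> = a1 ^ N1 / fact N1 * (\<Sum>n2\<le>N2. a2 ^ n2 / fact n2)"
    by (rule sum_distrib_left[symmetric])
  finally have num: "(\<Sum>s\<in>S. w s * (1 - ad1 s)) = a1 ^ N1 / fact N1 * (\<Sum>n2\<le>N2. a2 ^ n2 / fact n2)" .
  have vpos: "0 < (\<Sum>n2\<le>N2. a2 ^ n2 / fact n2)"
    by (rule sum_pos2[of _ 0]) (use a2_pos in auto)
  have "(\<Sum>s\<in>S. pp s * (1 - ad1 s)) = (\<Sum>s\<in>S. w s * (1 - ad1 s)) / Z"
    by (simp add: pp_def sum_divide_distrib)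
  also have "\<dots> = (a1 ^ N1 / fact N1) / (\<Sum>n1\<le>N1. a1 ^ n1 / fact n1)"
    unfolding num Z_00[OF assms] using vpos by simp
  finally show ?thesis by (simp add: erlangB_def)
qed

lemma B2_00: assumes "k1 = 0" "k2 = 0"
  shows "(\<Sum>s\<in>S. pp s * (1 - ad2 s)) = erlangB N2 a2"
proof -
  have "(\<Sum>s\<in>S. w s * (1 - ad2 s)) = (\<Sum>n1\<le>N1. \<Sum>n2\<le>N2. a1 ^ n1 / fact n1 * (a2 ^ n2 / fact n2) * (1 - ad2 (n1, n2)))"
    by (rule box_sum[OF assms]) (use w_out_box[OF assms] in auto)
  also have "\<dots> = (\<Sum>n1\<le>N1. \<Sum>n2\<le>N2. (if n2 = N2 then a1 ^ n1 / fact n1 * (a2 ^ n2 / fact n2) else 0))"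
  proof (intro sum.cong refl)
    fix n1 n2 assume "n1 \<in> {..N1}" "n2 \<in> {..N2}"
    then have le: "n1 \<le> N1" "n2 \<le> N2" by auto
    have "1 - ad2 (n1, n2) = (if n2 = N2 then 1 else 0)"
    proof (cases "n2 = N2")
      case True then show ?thesis unfolding ad2_def adm_al al_def using assms by simp
    next
      case False
      then have "n2 < N2" "n1 + n2 < N1 + N2" using le by auto
      then show ?thesis using False unfolding ad2_def adm_al al_def using assms by simp
    qed
    then show "a1 ^ n1 / fact n1 * (a2 ^ n2 / fact n2) * (1 - ad2 (n1, n2)) = (if n2 = N2 then a1 ^ n1 / fact n1 * (a2 ^ n2 / fact n2) else 0)"
      by simp
  qed
  also have "\<dots> = (\<Sum>n1\<le>N1. a1 ^ n1 / fact n1 * (a2 ^ N2 / fact N2))"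
    by simp
  also have "\<dots> = (\<Sum>n1\<le>N1. a1 ^ n1 / fact n1) * (a2 ^ N2 / fact N2)"
    by (rule sum_distrib_right[symmetric])
  finally have num: "(\<Sum>s\<in>S. w s * (1 - ad2 s)) = (\<Sum>n1\<le>N1. a1 ^ n1 / fact n1) * (a2 ^ N2 / fact N2)" .
  have upos: "0 < (\<Sum>n1\<le>N1. a1 ^ n1 / fact n1)"
    by (rule sum_pos2[of _ 0]) (use a1_pos in auto)
  have "(\<Sum>s\<in>S. pp s * (1 - ad2 s)) = (\<Sum>s\<in>S. w s * (1 - ad2 s)) / Z"
    by (simp add: pp_def sum_divide_distrib)
  also have "\<dots> = (a2 ^ N2 / fact N2) / (\<Sum>n2\<le>N2. a2 ^ n2 / fact n2)"
    unfolding num Z_00[OF assms] using upos by simp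
  finally show ?thesis by (simp add: erlangB_def)
qed

end


lemma nat_floor_lt:
  assumes "0 \<le> t" "t < 1" "0 < N"
  shows "nat \<lfloor>t * real N\<rfloor> < N"
proof -
  have "t * real N < real N" using assms by simp
  then have lt: "\<lfloor>t * real N\<rfloor> < int N" by (simp add: floor_less_iff)
  have "0 \<le> \<lfloor>t * real N\<rfloor>" using assms by simp
  then show ?thesis using lt by (simp add: nat_less_iff)
qed

lemma frac_lt_helper:
  fixes a b c d :: real
  assumes "0 < b" "0 < d" "a * d < c * b"
  shows "a / b < c / d"
  using assms by (simp add: field_simps)

lemma main_ineq:
  fixes N1 N2 :: nat and l1 l2 m1 m2 :: real
  assumes N1: "0 < N1" and N2: "0 < N2"
    and l1: "0 < l1" and l2: "0 < l2" and m1: "0 < m1" and m2: "0 < m2"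
    and mm: "m1 = m2"
    and x: "x \<in> unit_square" and x1: "x \<noteq> (1, 1)"
  shows "util_obj N1 N2 l1 l2 m1 m2 (1, 1) < util_obj N1 N2 l1 l2 m1 m2 x"
proof -
  interpret X: bo N1 N2 l1 l2 m1 m2 "fst x * real N1" "snd x * real N2"
    by unfold_locales (use assms in auto)
  interpret Y: bo N1 N2 l1 l2 m1 m2 "real N1" "real N2"
    by unfold_locales (use assms in auto)
  have ux: "util_obj N1 N2 l1 l2 m1 m2 x = 1 - m1 * X.EM / (l1 + l2)"
    by (rule X.util_EM) (simp_all add: mm)
  have u1: "util_obj N1 N2 l1 l2 m1 m2 (1, 1) = 1 - m1 * Y.EM / (l1 + l2)"
    by (rule Y.util_EM) (simp_all add: mm)
  define n where "n = N1 + N2"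
  have n0: "0 < n" using N1 by (simp add: n_def)
  have xs: "0 \<le> fst x" "fst x \<le> 1" "0 \<le> snd x" "snd x \<le> 1"
    using x by (auto simp: unit_square_def mem_Times_iff)
  have Wstr: "real n * X.W n < (X.a1 + X.a2) * X.W (n - 1)"
  proof (cases "snd x < 1")
    case True
    then have "nat \<lfloor>snd x * real N2\<rfloor> < N2" using xs N2 by (intro nat_floor_lt) auto
    then show ?thesis unfolding n_def by (rule X.W_strict1)
  next
    case False
    then have "snd x = 1" using xs by simp
    then have "fst x < 1" using x1 xs by (cases x) auto
    then have "nat \<lfloor>fst x * real N1\<rfloor> < N1" using xs N1 by (intro nat_floor_lt) auto
    then show ?thesis unfolding n_def by (rule X.W_strict2)
  qed
  have ch: "(\<Sum>m\<le>n. real m * X.W m) * (\<Sum>m\<le>n. Y.W m) < (\<Sum>m\<le>n. real m * Y.W m) * (\<Sum>m\<le>n. X.W m)"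
  proof (rule cheb[where a = "X.a1 + X.a2"])
    show "\<And>m. m \<le> n \<Longrightarrow> 0 < Y.W m"
      by (rule Y.W_pos, rule Y.ph2_full) (simp_all add: n_def)
    show "\<And>m. 0 \<le> X.W m" by (rule X.W_nonneg)
    show "\<And>m. m < n \<Longrightarrow> real (Suc m) * Y.W (Suc m) = (X.a1 + X.a2) * Y.W m"
      by (rule Y.W_rec_eq; rule Y.ph1_full Y.ph2_full) (simp_all add: n_def)
    show "\<And>m. m < n \<Longrightarrow> real (Suc m) * X.W (Suc m) \<le> (X.a1 + X.a2) * X.W m"
      by (rule X.W_rec_le)
    show "real n * X.W n < (X.a1 + X.a2) * X.W (n - 1)" by (rule Wstr)
    show "0 < n" by (rule n0)
  qed
  have zx: "0 < (\<Sum>m\<le>n. X.W m)" using X.Z_pos X.Z_W by (simp add: n_def)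
  have zy: "0 < (\<Sum>m\<le>n. Y.W m)" using Y.Z_pos Y.Z_W by (simp add: n_def)
  have "X.EM < Y.EM"
    unfolding X.EM_W Y.EM_W n_def[symmetric] by (rule frac_lt_helper[OF zx zy ch])
  then have "m1 * X.EM / (l1 + l2) < m1 * Y.EM / (l1 + l2)"
    using m1 l1 l2 by (intro divide_strict_right_mono mult_strict_left_mono) auto
  then show ?thesis unfolding ux u1 by linarith
qed


theorem corollary1:
  fixes N1 N2 :: nat and l1 l2 m1 m2 :: real
  assumes "0 < N1" and "0 < N2"
    and "0 < l1" and "0 < l2" and "0 < m1" and "0 < m2"
    and "m1 = m2"
    and "erlangB N1 (l1 / m1) = erlangB N2 (l2 / m2)"
  shows "(1, 1) \<in> closure (pareto_set N1 N2 l1 l2 m1 m2) \<and>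
         (\<forall>x\<in>closure (pareto_set N1 N2 l1 l2 m1 m2). x \<noteq> (1, 1) \<longrightarrow>
            util_obj N1 N2 l1 l2 m1 m2 (1, 1) < util_obj N1 N2 l1 l2 m1 m2 x)"
proof -
  note main = main_ineq[OF assms(1-7)]
  interpret Y: bo N1 N2 l1 l2 m1 m2 "real N1" "real N2"
    by unfold_locales (use assms in auto)
  interpret Z0: bo N1 N2 l1 l2 m1 m2 0 0
    by unfold_locales (use assms in auto)
  let ?U = "util_obj N1 N2 l1 l2 m1 m2"
  let ?B1 = "B1 N1 N2 l1 l2 m1 m2"
  let ?B2 = "B2 N1 N2 l1 l2 m1 m2"
  define e where "e = erlangB N1 (l1 / m1)"
  have L: "0 < l1 + l2" using assms by simp
  have b1: "?B1 (1, 1) = 1 - (\<Sum>s\<in>bo_states N1 N2. Y.pp s * Y.ad1 s)" by (rule Y.B1_eq) simp_all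
  have b2: "?B2 (1, 1) = 1 - (\<Sum>s\<in>bo_states N1 N2. Y.pp s * Y.ad2 s)" by (rule Y.B2_eq) simp_all
  have beq: "?B1 (1, 1) = ?B2 (1, 1)"
    unfolding b1 b2 by (intro arg_cong[where f = "\<lambda>t. 1 - t"] sum.cong refl) (simp add: Y.ad_eq_11)
  have hL: "l1 / (l1 + l2) + l2 / (l1 + l2) = 1" using L by (simp add: add_divide_distrib[symmetric])
  have u11: "?U (1, 1) = ?B1 (1, 1)"
    unfolding util_obj_def beq[symmetric] by (metis hL distrib_right mult_1)
  have e1: "?B1 (0, 0) = e"
  proof -
    have "?B1 (0, 0) = 1 - (\<Sum>s\<in>bo_states N1 N2. Z0.pp s * Z0.ad1 s)" by (rule Z0.B1_eq) simp_all
    also have "\<dots> = (\<Sum>s\<in>bo_states N1 N2. Z0.pp s * (1 - Z0.ad1 s))"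
      using Z0.pp_sum by (simp add: algebra_simps sum_subtractf)
    also have "\<dots> = erlangB N1 Z0.a1" by (rule Z0.B1_00) simp_all
    finally show ?thesis by (simp add: e_def Z0.a1_def)
  qed
  have e2: "?B2 (0, 0) = e"
  proof -
    have "?B2 (0, 0) = 1 - (\<Sum>s\<in>bo_states N1 N2. Z0.pp s * Z0.ad2 s)" by (rule Z0.B2_eq) simp_all
    also have "\<dots> = (\<Sum>s\<in>bo_states N1 N2. Z0.pp s * (1 - Z0.ad2 s))"
      using Z0.pp_sum by (simp add: algebra_simps sum_subtractf)
    also have "\<dots> = erlangB N2 Z0.a2" by (rule Z0.B2_00) simp_all
    finally show ?thesis using assms(8) by (simp add: e_def Z0.a2_def)
  qed
  have u00: "?U (0, 0) = e"
    unfolding util_obj_def e1 e2 by (metis hL distrib_right mult_1)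
  have sq00: "(0::real, 0::real) \<in> unit_square" by (simp add: unit_square_def)
  have sq11: "(1::real, 1::real) \<in> unit_square" by (simp add: unit_square_def)
  have lt: "?U (1, 1) < e" using main[OF sq00] u00 by simp
  have qos: "QoS_stable N1 N2 l1 l2 m1 m2 (1, 1)"
    unfolding QoS_stable_def using sq11 lt u11 beq e_def assms(8) by simp
  have nodom: "\<not> (\<exists>x'\<in>unit_square.
               ?B1 x' \<le> ?B1 (1, 1) \<and> ?B2 x' \<le> ?B2 (1, 1) \<and>
               (?B1 x' < ?B1 (1, 1) \<or> ?B2 x' < ?B2 (1, 1)))"
  proof
    assume "\<exists>x'\<in>unit_square. ?B1 x' \<le> ?B1 (1, 1) \<and> ?B2 x' \<le> ?B2 (1, 1) \<and>
               (?B1 x' < ?B1 (1, 1) \<or> ?B2 x' < ?B2 (1, 1))"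
    then obtain x' where x': "x' \<in> unit_square" "?B1 x' \<le> ?B1 (1, 1)" "?B2 x' \<le> ?B2 (1, 1)"
      "?B1 x' < ?B1 (1, 1) \<or> ?B2 x' < ?B2 (1, 1)" by blast
    have "l1 * ?B1 x' + l2 * ?B2 x' < l1 * ?B1 (1, 1) + l2 * ?B2 (1, 1)"
      using x'(2-4) assms(3,4)
      by (smt (verit) mult_left_mono mult_strict_left_mono)
    then have "(l1 * ?B1 x' + l2 * ?B2 x') / (l1 + l2) < (l1 * ?B1 (1, 1) + l2 * ?B2 (1, 1)) / (l1 + l2)"
      using L by (rule divide_strict_right_mono)
    moreover have "?U y = (l1 * ?B1 y + l2 * ?B2 y) / (l1 + l2)" for y
      unfolding util_obj_def by (simp add: add_divide_distrib)
    ultimately have ult: "?U x' < ?U (1, 1)" by simp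
    show False
    proof (cases "x' = (1, 1)")
      case True then show False using ult by simp
    next
      case False then show False using main[OF x'(1) False] ult by simp
    qed
  qed
  have par: "(1, 1) \<in> pareto_set N1 N2 l1 l2 m1 m2"
    unfolding pareto_set_def using qos nodom by blast
  have sub: "pareto_set N1 N2 l1 l2 m1 m2 \<subseteq> unit_square"
    by (auto simp: pareto_set_def QoS_stable_def)
  have cl: "closed unit_square" unfolding unit_square_def
    by (intro closed_Times closed_atLeastAtMost)
  have csub: "closure (pareto_set N1 N2 l1 l2 m1 m2) \<subseteq> unit_square"
    by (rule closure_minimal[OF sub cl])
  show ?thesis
  proof
    show "(1, 1) \<in> closure (pareto_set N1 N2 l1 l2 m1 m2)" using par closure_subset by blast
    show "\<forall>x\<in>closure (pareto_set N1 N2 l1 l2 m1 m2). x \<noteq> (1, 1) \<longrightarrow> ?U (1, 1) < ?U x"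
      using csub main by blast
  qed
qed


end
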